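(* Let $n\ge 1$, let $q$ be an indeterminate, and let $\mathcal F^n$ be the Fock representation of the $q$-boson algebra described in the context, with the parameter $z=1$ (periodic boundary conditions; site indices are read modulo $n$, so $\beta_0=\beta_n$, $\beta^*_{n+1}=\beta^*_1$). Let $Q^+(v)=\sum_{r\ge0}Q^+_rv^r$ be the $Q^+$-operator defined in the context; since $Q^+_0=1$ it is invertible as a formal power series in $v$ with coefficients in $\mathrm{End}\,\mathcal F^n$. For $j=1,\dots,n$ define the formal power series $$\tilde\beta_j(v)=Q^+(v)\,\beta_j\,Q^+(v)^{-1}=\sum_{r\ge0}v^r\tilde\beta_{j,r},\qquad \tilde\beta^*_j(v)=Q^+(v)\,\beta^*_j\,Q^+(v)^{-1}=\sum_{r\ge0}v^r\tilde\beta^*_{j,r}.$$ Then, writing $\tilde\beta_j=\tilde\beta_j(v)$ and $\tilde\beta_j^*=\tilde\beta^*_j(v)$, for all $j$ (indices mod $n$) $$\tilde\beta_j-\beta_j=v\,(1-\beta_j^*\tilde\beta_j)\,\tilde\beta_{j-1},\qquad \tilde\beta_j^*-\beta_j^*=v\,\beta^*_{j+1}\,(\beta_j^*\tilde\beta_j-1).$$ Moreover these relations determine the coefficients $\tilde\beta_{j,r},\tilde\beta^*_{j,r}$ recursively (order by order in $v$) when expanding in powers of $v$.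
   Context: $(q^2)_m:=\prod_{j=1}^m(1-q^{2j})$. Fock representation: $\mathcal F^n$ is the $\mathbb C(q)$-vector space with basis $|\lambda\rangle$ indexed by partitions $\lambda$ with at most $n$ parts; put $m_j(\lambda)=\lambda_j-\lambda_{j+1}$ ($\lambda_{n+1}=0$), the multiplicity of columns of height $j$ in the Young diagram of $\lambda$ (interpreted as the number of particles at site $j$), so $\lambda\leftrightarrow(m_1,\dots,m_n)\in\mathbb Z_{\ge0}^n$ bijectively. Operators: $\beta_j^*$ sends $|\lambda\rangle$ to $(1-q^{2m_j(\lambda)+2})$ times the basis vector with $m_j$ increased by one; $\beta_j$ sends $|\lambda\rangle$ to the basis vector with $m_j$ decreased by one (and to $0$ if $m_j(\lambda)=0$); $q^{N_j}|\lambda\rangle=q^{m_j(\lambda)}|\lambda\rangle$ and $q^{2N_j}=(q^{N_j})^2$. In particular $\beta_j^*\beta_j=1-q^{2N_j}$. The $Q^+$-operator: $Q^+(v)=\sum_{r\ge0}v^rQ^+_r$ with $$Q^+_r=(-1)^r\sum_{\alpha}z^{\alpha_n}\frac{(\beta_1^* )^{\alpha_n}(\beta_1\beta_2^* )^{\alpha_1}\cdots(\beta_{n-1}\beta_n^* )^{\alpha_{n-1}}\beta_n^{\alpha_n}}{(q^2)_{\alpha_1}\cdots(q^2)_{\alpha_n}},$$ the sum over all compositions $\alpha=(\alpha_1,\dots,\alpha_n)\in\mathbb Z_{\ge0}^n$ with $\alpha_1+\dots+\alpha_n=r$ (here $z=1$). Equivalently, $Q^+(v)$ is the trace $\sum_{m_1,\dots,m_n\ge0}z^{m_1}\ell_1(m_1,m_2)\ell_2(m_2,m_3)\cdots\ell_n(m_n,m_1)$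 with $\ell_i(a,b)=(-v)^a(\beta_i^* )^a\beta_i^b/(q^2)_a$. *)

theory Defs
  imports "HOL-Computational_Algebra.Polynomial" "HOL-Computational_Algebra.Fraction_Field"
begin

text \<open>Ground field C(q): rational functions in an indeterminate q over the complex numbers.\<close>
type_synonym K = "complex poly fract"

definition qq :: K where "qq = Fract [:0, 1:] 1"

definition qpoch :: "nat \<Rightarrow> K" where
  "qpoch m = (\<Prod>j=1..m. 1 - qq ^ (2 * j))"

text \<open>Configurations m = (m_1,...,m_n) (sites 1..n; m i = 0 outside 1..n),
  vectors as coefficient functions on configurations, operators as maps on vectors.\<close>
type_synonym cfg = "nat \<Rightarrow> nat"
type_synonym vec = "cfg \<Rightarrow> K"
type_synonym op = "vec \<Rightarrow> vec"

definition is_cfg :: "nat \<Rightarrow> cfg \<Rightarrow> bool" where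
  "is_cfg n m \<longleftrightarrow> (\<forall>i. i \<notin> {1..n} \<longrightarrow> m i = 0)"

text \<open>Elements of the Fock space F^n: finite linear combinations of basis vectors |m>.\<close>
definition fock :: "nat \<Rightarrow> vec \<Rightarrow> bool" where
  "fock n f \<longleftrightarrow> finite {m. f m \<noteq> 0} \<and> (\<forall>m. f m \<noteq> 0 \<longrightarrow> is_cfg n m)"

text \<open>beta_j |m> = |m - e_j> (0 if m_j = 0); on coefficients: (beta_j f)(m) = f(m + e_j).\<close>
definition bet :: "nat \<Rightarrow> op" where
  "bet j f = (\<lambda>m. f (m(j := Suc (m j))))"

text \<open>beta*_j |m> = (1 - q^(2 m_j + 2)) |m + e_j>.\<close>
definition betS :: "nat \<Rightarrow> op" where
  "betS j f = (\<lambda>m. if m j = 0 then 0 else (1 - qq ^ (2 * m j)) * f (m(j := m j - 1)))"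

definition op_add :: "op \<Rightarrow> op \<Rightarrow> op" where
  "op_add A B = (\<lambda>f m. A f m + B f m)"
definition op_sub :: "op \<Rightarrow> op \<Rightarrow> op" where
  "op_sub A B = (\<lambda>f m. A f m - B f m)"
definition op_zero :: op where
  "op_zero = (\<lambda>f m. 0)"
definition op_smul :: "K \<Rightarrow> op \<Rightarrow> op" where
  "op_smul c A = (\<lambda>f m. c * A f m)"
definition op_sum :: "'i set \<Rightarrow> ('i \<Rightarrow> op) \<Rightarrow> op" where
  "op_sum S A = (\<lambda>f m. \<Sum>i\<in>S. A i f m)"

definition comps :: "nat \<Rightarrow> nat \<Rightarrow> (nat \<Rightarrow> nat) set" where
  "comps n r = {\<alpha>. (\<forall>i. i \<notin> {1..n} \<longrightarrow> \<alpha> i = 0) \<and> (\<Sum>i=1..n. \<alpha> i) = r}"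

definition Qword :: "nat \<Rightarrow> (nat \<Rightarrow> nat) \<Rightarrow> op" where
  "Qword n \<alpha> = (betS 1 ^^ \<alpha> n) \<circ>
      foldr (\<lambda>i acc. ((bet i \<circ> betS (Suc i)) ^^ \<alpha> i) \<circ> acc) [1..<n] id \<circ>
      (bet n ^^ \<alpha> n)"

definition Qcoef :: "nat \<Rightarrow> nat \<Rightarrow> op" where
  "Qcoef n r = op_smul ((-1) ^ r)
     (op_sum (comps n r) (\<lambda>\<alpha>. op_smul (inverse (\<Prod>i=1..n. qpoch (\<alpha> i))) (Qword n \<alpha>)))"

text \<open>Coefficients of Q^+(v)^{-1} (as a formal power series in v), computed recursively
  from Q^+_0 = 1: P_0 = 1, P_r = - sum_{k=1}^r Q^+_k P_{r-k}.\<close>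
primrec Qinvl :: "nat \<Rightarrow> nat \<Rightarrow> op list" where
  "Qinvl n 0 = [id]"
| "Qinvl n (Suc r) = (let L = Qinvl n r in
     L @ [op_smul (-1) (op_sum {1..Suc r} (\<lambda>k. Qcoef n k \<circ> L ! (Suc r - k)))])"

definition Qinv :: "nat \<Rightarrow> nat \<Rightarrow> op" where
  "Qinv n r = Qinvl n r ! r"

text \<open>Formal power series in v with operator coefficients: nat => op.\<close>
definition ps_mult :: "(nat \<Rightarrow> op) \<Rightarrow> (nat \<Rightarrow> op) \<Rightarrow> nat \<Rightarrow> op" where
  "ps_mult A B r = op_sum {..r} (\<lambda>k. A k \<circ> B (r - k))"
definition ps_const :: "op \<Rightarrow> nat \<Rightarrow> op" where
  "ps_const A r = (if r = 0 then A else op_zero)"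
definition ps_one :: "nat \<Rightarrow> op" where
  "ps_one = ps_const id"
definition ps_sub :: "(nat \<Rightarrow> op) \<Rightarrow> (nat \<Rightarrow> op) \<Rightarrow> nat \<Rightarrow> op" where
  "ps_sub A B r = op_sub (A r) (B r)"
text \<open>multiplication by v\<close>
definition ps_v :: "(nat \<Rightarrow> op) \<Rightarrow> nat \<Rightarrow> op" where
  "ps_v A r = (if r = 0 then op_zero else A (r - 1))"

definition Qser :: "nat \<Rightarrow> nat \<Rightarrow> op" where
  "Qser n = Qcoef n"

definition conjQ :: "nat \<Rightarrow> op \<Rightarrow> nat \<Rightarrow> op" where
  "conjQ n A = ps_mult (ps_mult (Qser n) (ps_const A)) (Qinv n)"

definition tbet :: "nat \<Rightarrow> nat \<Rightarrow> nat \<Rightarrow> op" where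
  "tbet n j = conjQ n (bet j)"
definition tbetS :: "nat \<Rightarrow> nat \<Rightarrow> nat \<Rightarrow> op" where
  "tbetS n j = conjQ n (betS j)"

definition prevs :: "nat \<Rightarrow> nat \<Rightarrow> nat" where
  "prevs n j = (if j = 1 then n else j - 1)"
definition nexts :: "nat \<Rightarrow> nat \<Rightarrow> nat" where
  "nexts n j = (if j = n then 1 else j + 1)"

definition eq_on :: "nat \<Rightarrow> op \<Rightarrow> op \<Rightarrow> bool" where
  "eq_on n A B \<longleftrightarrow> (\<forall>f. fock n f \<longrightarrow> A f = B f)"

definition rels :: "nat \<Rightarrow> (nat \<Rightarrow> nat \<Rightarrow> op) \<Rightarrow> (nat \<Rightarrow> nat \<Rightarrow> op) \<Rightarrow> bool" where
  "rels n X Y \<longleftrightarrow> (\<forall>j\<in>{1..n}. \<forall>r.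
     eq_on n (ps_sub (X j) (ps_const (bet j)) r)
       (ps_v (ps_mult (ps_sub ps_one (ps_mult (ps_const (betS j)) (X j))) (X (prevs n j))) r)
   \<and> eq_on n (ps_sub (Y j) (ps_const (betS j)) r)
       (ps_v (ps_mult (ps_const (betS (nexts n j))) (ps_sub (ps_mult (ps_const (betS j)) (X j)) ps_one)) r))"

end

theory Submission
  imports Defs
begin

definition lin :: "op \<Rightarrow> bool" where
  "lin A \<longleftrightarrow> (\<forall>f g. A (\<lambda>m. f m + g m) = (\<lambda>m. A f m + A g m)) \<and> (\<forall>c f. A (\<lambda>m. c * f m) = (\<lambda>m. c * A f m))"

lemma lin_add: "lin A \<Longrightarrow> A (\<lambda>m. f m + g m) m = A f m + A g m"
  unfolding lin_def by metis
lemma lin_smul: "lin A \<Longrightarrow> A (\<lambda>m. c * f m) m = c * A f m"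
  unfolding lin_def by metis
lemma lin_zero: "lin A \<Longrightarrow> A (\<lambda>m. 0) m = 0"
  using lin_smul[of A 0 "\<lambda>m. 0" m] by simp
lemma lin_zero': "lin A \<Longrightarrow> A (op_zero f) m = 0" 
  unfolding op_zero_def using lin_zero by simp
lemma lin_sum: "lin A \<Longrightarrow> A (\<lambda>m. \<Sum>i\<in>S. f i m) m = (\<Sum>i\<in>S. A (f i) m)"
proof (induction S arbitrary: m rule: infinite_finite_induct)
  case (infinite S) then show ?case by (simp add: lin_zero)
next
  case empty then show ?case by (simp add: lin_zero)
next
  case (insert x F)
  have "A (\<lambda>m. \<Sum>i\<in>insert x F. f i m) m = A (\<lambda>m. f x m + (\<Sum>i\<in>F. f i m)) m"
    using insert by simp
  also have "\<dots> = A (f x) m + A (\<lambda>m. \<Sum>i\<in>F. f i m) m" using insert(4) by (rule lin_add)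
  finally show ?case using insert by simp
qed

lemma lin_id: "lin id" unfolding lin_def by simp
lemma lin_comp: "lin A \<Longrightarrow> lin B \<Longrightarrow> lin (A \<circ> B)"
  unfolding lin_def by simp
lemma lin_op_zero: "lin op_zero" unfolding lin_def op_zero_def by simp
lemma lin_op_smul: "lin A \<Longrightarrow> lin (op_smul c A)"
  unfolding lin_def op_smul_def by (simp add: algebra_simps)
lemma lin_op_sub: "lin A \<Longrightarrow> lin B \<Longrightarrow> lin (op_sub A B)"
  unfolding lin_def op_sub_def by (simp add: algebra_simps)
lemma lin_op_sum: "(\<And>i. i \<in> S \<Longrightarrow> lin (A i)) \<Longrightarrow> lin (op_sum S A)"
  unfolding lin_def op_sum_def by (simp add: algebra_simps sum.distrib sum_distrib_left)
lemma lin_bet: "lin (bet j)" unfolding lin_def bet_def by simp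
lemma lin_betS: "lin (betS j)" unfolding lin_def betS_def by (auto simp: algebra_simps fun_eq_iff)
lemma lin_funpow: "lin A \<Longrightarrow> lin (A ^^ k)"
  by (induction k) (auto simp: lin_id lin_comp)

lemma lin_foldr: "(\<forall>i\<in>set xs. lin (P i)) \<Longrightarrow> lin B \<Longrightarrow> lin (foldr (\<lambda>i acc. P i \<circ> acc) xs B)"
  by (induction xs) (auto simp: lin_comp)

lemma lin_Qword: "lin (Qword n \<alpha>)"
  unfolding Qword_def
  by (intro lin_comp lin_funpow lin_betS lin_bet lin_foldr) (auto intro: lin_comp lin_funpow lin_betS lin_bet lin_id)

lemma lin_Qcoef: "lin (Qcoef n r)"
  unfolding Qcoef_def by (intro lin_op_smul lin_op_sum lin_Qword)

lemma Qinvl_len: "length (Qinvl n r) = Suc r"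
  by (induction r) (auto simp: Let_def)

lemma Qinvl_nth: "k \<le> r \<Longrightarrow> Qinvl n r ! k = Qinv n k"
proof (induction r)
  case 0 then show ?case by (simp add: Qinv_def)
next
  case (Suc r)
  show ?case
  proof (cases "k = Suc r")
    case True then show ?thesis by (simp add: Qinv_def)
  next
    case False then have "k \<le> r" using Suc by simp
    then show ?thesis using Suc by (simp add: Let_def nth_append Qinvl_len)
  qed
qed

lemma Qinv_0: "Qinv n 0 = id" by (simp add: Qinv_def)
lemma Qinv_Suc: "Qinv n (Suc r) = op_smul (-1) (op_sum {1..Suc r} (\<lambda>k. Qcoef n k \<circ> Qinv n (Suc r - k)))"
proof -
  have "Qinv n (Suc r) = op_smul (-1) (op_sum {1..Suc r} (\<lambda>k. Qcoef n k \<circ> Qinvl n r ! (Suc r - k)))"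
    by (simp add: Qinv_def Let_def nth_append Qinvl_len)
  also have "\<dots> = op_smul (-1) (op_sum {1..Suc r} (\<lambda>k. Qcoef n k \<circ> Qinv n (Suc r - k)))"
    unfolding op_sum_def by (intro arg_cong[where f="op_smul _"] ext sum.cong) (auto simp: Qinvl_nth)
  finally show ?thesis .
qed

lemma lin_Qinv: "lin (Qinv n r)"
proof (induction r rule: less_induct)
  case (less r)
  show ?case
  proof (cases r)
    case 0 then show ?thesis using lin_id by (simp add: Qinv_0 id_def)
  next
    case (Suc s)
    show ?thesis unfolding Suc Qinv_Suc
      by (intro lin_op_smul lin_op_sum lin_comp lin_Qcoef) (use less Suc in auto)
  qed
qed

definition lin_ps :: "(nat \<Rightarrow> op) \<Rightarrow> bool" where "lin_ps A \<longleftrightarrow> (\<forall>k. lin (A k))"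

lemma psm_app: "ps_mult A B r f m = (\<Sum>k\<le>r. A k (B (r-k) f) m)"
  by (simp add: ps_mult_def op_sum_def)

lemma ps_assoc:
  assumes "lin_ps A"
  shows "ps_mult (ps_mult A B) C = ps_mult A (ps_mult B C)"
proof (intro ext)
  fix r f m
  have "ps_mult (ps_mult A B) C r f m = (\<Sum>k\<le>r. \<Sum>i\<le>k. A i (B (k-i) (C (r-k) f)) m)"
    by (simp add: psm_app)
  also have "\<dots> = (\<Sum>k\<le>r. \<Sum>i\<le>k. (\<lambda>i l. A i (B l (C (r-i-l) f)) m) i (k - i))"
    by (intro sum.cong refl) auto
  also have "\<dots> = (\<Sum>(i,l)\<in>{(i,l). i+l \<le> r}. A i (B l (C (r-i-l) f)) m)"
    by (rule sum.triangle_reindex_eq[symmetric])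
  also have "{(i,l). i+l \<le> r} = Sigma {..r} (\<lambda>i. {..r-i})" by auto
  also have "(\<Sum>(i,l)\<in>Sigma {..r} (\<lambda>i. {..r-i}). A i (B l (C (r-i-l) f)) m)
      = (\<Sum>i\<le>r. \<Sum>l\<le>r-i. A i (B l (C (r-i-l) f)) m)"
    by (rule sum.Sigma[symmetric]) auto
  also have "\<dots> = ps_mult A (ps_mult B C) r f m"
    unfolding psm_app
    by (intro sum.cong refl) (simp add: psm_app diff_diff_left lin_sum[OF assms[unfolded lin_ps_def, rule_format]])
  finally show "ps_mult (ps_mult A B) C r f m = ps_mult A (ps_mult B C) r f m" .
qed

lemma psc_app: "ps_const A r f m = (if r = 0 then A f m else 0)"
  by (simp add: ps_const_def op_zero_def)

lemma ps_const_left: "ps_mult (ps_const A) B r f m = A (B r f) m"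
proof -
  have "ps_mult (ps_const A) B r f m = (\<Sum>k\<in>{0}. ps_const A k (B (r-k) f) m)"
    unfolding psm_app by (rule sum.mono_neutral_right) (auto simp: psc_app)
  then show ?thesis by (simp add: psc_app)
qed

lemma ps_const_right: "lin_ps A \<Longrightarrow> ps_mult A (ps_const B) r f m = A r (B f) m"
proof -
  assume l: "lin_ps A"
  have "ps_mult A (ps_const B) r f m = (\<Sum>k\<in>{r}. A k (ps_const B (r-k) f) m)"
    unfolding psm_app by (rule sum.mono_neutral_right) (use l in \<open>auto simp: ps_const_def lin_ps_def lin_zero'\<close>)
  then show ?thesis by (simp add: psc_app ps_const_def)
qed

lemma ps_one_left: "ps_mult ps_one B = B"
  by (intro ext) (simp add: ps_one_def ps_const_left)
lemma ps_one_right: "lin_ps A \<Longrightarrow> ps_mult A ps_one = A"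
  by (intro ext) (simp add: ps_one_def ps_const_right)

lemma ps_sub_app: "ps_sub A B r f m = A r f m - B r f m"
  by (simp add: ps_sub_def op_sub_def)

lemma ps_sub_left: "ps_mult (ps_sub A B) C = ps_sub (ps_mult A C) (ps_mult B C)"
  by (intro ext) (simp add: psm_app ps_sub_app sum_subtractf)

lemma ps_v_app: "ps_v A r f m = (if r = 0 then 0 else A (r-1) f m)"
  by (simp add: ps_v_def op_zero_def)

lemma ps_v_left: "ps_mult (ps_v A) C = ps_v (ps_mult A C)"
proof (intro ext)
  fix r f m
  show "ps_mult (ps_v A) C r f m = ps_v (ps_mult A C) r f m"
  proof (cases r)
    case 0 then show ?thesis by (simp add: psm_app ps_v_app)
  next
    case (Suc s)
    have "ps_mult (ps_v A) C r f m = (\<Sum>k\<in>Suc ` {..s}. ps_v A k (C (r-k) f) m)"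
      unfolding psm_app Suc atMost_Suc_eq_insert_0 by (subst sum.insert) (auto simp: ps_v_app)
    also have "\<dots> = (\<Sum>k\<le>s. A k (C (s-k) f) m)"
      by (subst sum.reindex) (auto simp: ps_v_app Suc)
    finally show ?thesis by (simp add: ps_v_app psm_app Suc)
  qed
qed

lemma lin_ps_mult: "lin_ps A \<Longrightarrow> lin_ps B \<Longrightarrow> lin_ps (ps_mult A B)"
  unfolding lin_ps_def ps_mult_def by (auto intro!: lin_op_sum lin_comp)
lemma lin_ps_const: "lin A \<Longrightarrow> lin_ps (ps_const A)"
  unfolding lin_ps_def ps_const_def by (auto simp: lin_op_zero)
lemma lin_ps_one: "lin_ps ps_one"
  unfolding ps_one_def by (rule lin_ps_const) (simp add: lin_def)
lemma lin_ps_sub: "lin_ps A \<Longrightarrow> lin_ps B \<Longrightarrow> lin_ps (ps_sub A B)"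
  unfolding lin_ps_def ps_sub_def by (auto intro!: lin_op_sub)
lemma lin_ps_v: "lin_ps A \<Longrightarrow> lin_ps (ps_v A)"
  unfolding lin_ps_def ps_v_def by (auto simp: lin_op_zero)
lemma lin_ps_Q: "lin_ps (Qser n)" unfolding lin_ps_def Qser_def by (simp add: lin_Qcoef)
lemma lin_ps_P: "lin_ps (Qinv n)" unfolding lin_ps_def by (simp add: lin_Qinv)

lemma comps_0: "comps n 0 = {\<lambda>_. 0}"
  unfolding comps_def by (auto simp: fun_eq_iff) (metis atLeastAtMost_iff)

lemma foldr_id: "foldr (\<lambda>i. (\<circ>) id) xs id = id"
  by (induction xs) auto

lemma Qcoef_0: "Qcoef n 0 = id"
  unfolding Qcoef_def comps_0 Qword_def
  by (simp add: op_smul_def op_sum_def qpoch_def foldr_id fun_eq_iff)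

lemma Qcoef_0_app: "Qcoef n 0 f m = f m" by (simp add: Qcoef_0)

lemma atMost_split0: "{..Suc s} = insert 0 {1..Suc s}" by auto

lemma QP: "ps_mult (Qser n) (Qinv n) = ps_one"
proof (intro ext)
  fix r f m
  show "ps_mult (Qser n) (Qinv n) r f m = ps_one r f m"
  proof (cases r)
    case 0 then show ?thesis by (simp add: psm_app Qser_def Qcoef_0 Qinv_0 ps_one_def psc_app)
  next
    case (Suc s)
    have "ps_mult (Qser n) (Qinv n) r f m = Qinv n r f m + (\<Sum>k\<in>{1..r}. Qcoef n k (Qinv n (r-k) f) m)"
      unfolding psm_app Suc atMost_split0 by (subst sum.insert) (auto simp: Qser_def Qcoef_0)
    also have "\<dots> = 0" unfolding Suc Qinv_Suc by (simp add: op_smul_def op_sum_def)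
    finally show ?thesis by (simp add: Suc ps_one_def psc_app)
  qed
qed

lemma ps_sub_right: "lin_ps A \<Longrightarrow> ps_mult A (ps_sub B C) = ps_sub (ps_mult A B) (ps_mult A C)"
proof (intro ext)
  fix r f m assume l: "lin_ps A"
  have la: "lin (A k)" for k using l by (simp add: lin_ps_def)
  have "A k (\<lambda>m. B (r-k) f m - C (r-k) f m) m = A k (B (r-k) f) m - A k (C (r-k) f) m" for k
  proof -
    have "A k (\<lambda>m. B (r-k) f m - C (r-k) f m) m = A k (\<lambda>m. B (r-k) f m + (-1) * C (r-k) f m) m" by simp
    also have "\<dots> = A k (B (r-k) f) m + (-1) * A k (C (r-k) f) m"
      by (simp only: lin_add[OF la] lin_smul[OF la])
    finally show ?thesis by simp
  qed
  then show "ps_mult A (ps_sub B C) r f m = ps_sub (ps_mult A B) (ps_mult A C) r f m"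
    by (simp add: psm_app ps_sub_def op_sub_def sum_subtractf)
qed

lemma PQ: "ps_mult (Qinv n) (Qser n) = ps_one"
proof -
  define E where "E = ps_sub (ps_mult (Qinv n) (Qser n)) ps_one"
  have "ps_mult (Qser n) E = ps_sub (ps_mult (Qser n) (ps_mult (Qinv n) (Qser n))) (ps_mult (Qser n) ps_one)"
    unfolding E_def by (rule ps_sub_right[OF lin_ps_Q])
  also have "ps_mult (Qser n) (ps_mult (Qinv n) (Qser n)) = Qser n"
    by (simp add: ps_assoc[OF lin_ps_Q, symmetric] QP ps_one_left)
  finally have QE: "ps_mult (Qser n) E r f m = 0" for r f m
    by (simp add: ps_one_right[OF lin_ps_Q] ps_sub_app)
  have "E r f = (\<lambda>m. 0)" for r f
  proof (induction r rule: less_induct)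
    case (less r)
    show ?case
    proof (cases r)
      case 0 then show ?thesis using QE[of 0 f] by (simp add: psm_app Qser_def Qcoef_0)
    next
      case (Suc s)
      show ?thesis
      proof
        fix m
        have "ps_mult (Qser n) E r f m = E r f m + (\<Sum>k\<in>{1..r}. Qcoef n k (E (r-k) f) m)"
          unfolding psm_app Suc atMost_split0 by (subst sum.insert) (auto simp: Qser_def Qcoef_0)
        also have "(\<Sum>k\<in>{1..r}. Qcoef n k (E (r-k) f) m) = 0"
          by (intro sum.neutral ballI) (use less Suc in \<open>auto simp: lin_zero lin_Qcoef\<close>)
        finally show "E r f m = 0" using QE by simp
      qed
    qed
  qed
  then show ?thesis unfolding E_def by (intro ext) (simp add: ps_sub_app fun_eq_iff)
qed

lemma cancel_right:
  assumes "lin_ps L" "lin_ps R" "lin_ps Q" "ps_mult Q P = ps_one" "ps_mult L Q = ps_mult R Q"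
  shows "L = R"
proof -
  have "L = ps_mult L ps_one" using assms by (simp add: ps_one_right)
  also have "\<dots> = ps_mult L (ps_mult Q P)" using assms(4) by simp
  also have "\<dots> = ps_mult (ps_mult L Q) P" by (rule ps_assoc[symmetric, OF assms(1)])
  also have "\<dots> = ps_mult (ps_mult R Q) P" using assms(5) by simp
  also have "\<dots> = ps_mult R (ps_mult Q P)" by (rule ps_assoc[OF assms(2)])
  also have "\<dots> = R" using assms by (simp add: ps_one_right)
  finally show ?thesis .
qed

lemma ps_const_right_fun: "lin_ps A \<Longrightarrow> ps_mult A (ps_const B) r f = A r (B f)"
  by (intro ext) (simp add: ps_const_right)
lemma ps_sub_fun: "ps_sub A B r f = (\<lambda>m. A r f m - B r f m)"
  by (intro ext) (simp add: ps_sub_app)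

lemma relX_generic:
  assumes lQ: "lin_ps Q" and lP: "lin_ps P" and QP: "ps_mult Q P = ps_one" and PQ: "ps_mult P Q = ps_one"
    and lb: "lin bj" "lin bp" "lin bsj"
    and star: "\<And>r f m. Q r (bj f) m - bj (Q r f) m =
       (if r = 0 then 0 else Q (r-1) (bp f) m - bsj (Q (r-1) (bj (bp f))) m)"
  defines "X \<equiv> ps_mult (ps_mult Q (ps_const bj)) P"
    and "Xp \<equiv> ps_mult (ps_mult Q (ps_const bp)) P"
  shows "ps_sub X (ps_const bj) = ps_v (ps_mult (ps_sub ps_one (ps_mult (ps_const bsj) X)) Xp)"
proof -
  have lX: "lin_ps X" "lin_ps Xp" unfolding X_def Xp_def
    using lQ lP lb by (auto intro!: lin_ps_mult lin_ps_const)
  have lD: "lin_ps (ps_sub ps_one (ps_mult (ps_const bsj) X))"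
    using lX lb by (auto intro!: lin_ps_sub lin_ps_one lin_ps_mult lin_ps_const)
  have XQ: "ps_mult X Q = ps_mult Q (ps_const bj)" unfolding X_def
    using lQ lb by (simp add: ps_assoc lin_ps_mult lin_ps_const PQ ps_one_right)
  have XpQ: "ps_mult Xp Q = ps_mult Q (ps_const bp)" unfolding Xp_def
    using lQ lb by (simp add: ps_assoc lin_ps_mult lin_ps_const PQ ps_one_right)
  show ?thesis
  proof (rule cancel_right[OF _ _ lQ QP])
    show "lin_ps (ps_sub X (ps_const bj))" using lX lb by (intro lin_ps_sub lin_ps_const)
    show "lin_ps (ps_v (ps_mult (ps_sub ps_one (ps_mult (ps_const bsj) X)) Xp))"
      using lX lD by (intro lin_ps_v lin_ps_mult)
    have "ps_mult (ps_v (ps_mult (ps_sub ps_one (ps_mult (ps_const bsj) X)) Xp)) Q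
      = ps_v (ps_mult (ps_mult (ps_sub ps_one (ps_mult (ps_const bsj) X)) Q) (ps_const bp))"
      using lD lb lX by (simp add: ps_v_left ps_assoc XpQ)
    also have "ps_mult (ps_sub ps_one (ps_mult (ps_const bsj) X)) Q
       = ps_sub Q (ps_mult (ps_const bsj) (ps_mult Q (ps_const bj)))"
      using lb by (simp add: ps_sub_left ps_one_left ps_assoc lin_ps_const XQ)
    finally have R: "ps_mult (ps_v (ps_mult (ps_sub ps_one (ps_mult (ps_const bsj) X)) Xp)) Q =
       ps_v (ps_mult (ps_sub Q (ps_mult (ps_const bsj) (ps_mult Q (ps_const bj)))) (ps_const bp))" .
    have lS: "lin_ps (ps_sub Q (ps_mult (ps_const bsj) (ps_mult Q (ps_const bj))))"
      using lQ lb by (intro lin_ps_sub lin_ps_mult lin_ps_const)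
    have "ps_mult (ps_sub X (ps_const bj)) Q = ps_sub (ps_mult Q (ps_const bj)) (ps_mult (ps_const bj) Q)"
      by (simp add: ps_sub_left XQ)
    also have "\<dots> = ps_v (ps_mult (ps_sub Q (ps_mult (ps_const bsj) (ps_mult Q (ps_const bj)))) (ps_const bp))"
      by (intro ext) (simp add: ps_sub_app ps_v_app ps_const_right[OF lS] ps_const_right[OF lQ]
             ps_const_right_fun[OF lQ] ps_const_left star)
    finally show "ps_mult (ps_sub X (ps_const bj)) Q = ps_mult (ps_v (ps_mult (ps_sub ps_one (ps_mult (ps_const bsj) X)) Xp)) Q"
      using R by simp
  qed
qed

lemma relY_generic:
  assumes lQ: "lin_ps Q" and lP: "lin_ps P" and QP: "ps_mult Q P = ps_one" and PQ: "ps_mult P Q = ps_one"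
    and lb: "lin bj" "lin bsj" "lin bst"
    and star: "\<And>r f m. Q r (bsj f) m - bsj (Q r f) m =
       (if r = 0 then 0 else bst (\<lambda>m. bsj (Q (r-1) (bj f)) m - Q (r-1) f m) m)"
  defines "X \<equiv> ps_mult (ps_mult Q (ps_const bj)) P"
    and "Y \<equiv> ps_mult (ps_mult Q (ps_const bsj)) P"
  shows "ps_sub Y (ps_const bsj) = ps_v (ps_mult (ps_const bst) (ps_sub (ps_mult (ps_const bsj) X) ps_one))"
proof -
  have lX: "lin_ps X" "lin_ps Y" unfolding X_def Y_def
    using lQ lP lb by (auto intro!: lin_ps_mult lin_ps_const)
  have lD: "lin_ps (ps_mult (ps_const bst) (ps_sub (ps_mult (ps_const bsj) X) ps_one))"
    using lX lb by (auto intro!: lin_ps_sub lin_ps_one lin_ps_mult lin_ps_const)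
  have XQ: "ps_mult X Q = ps_mult Q (ps_const bj)" unfolding X_def
    using lQ lb by (simp add: ps_assoc lin_ps_mult lin_ps_const PQ ps_one_right)
  have YQ: "ps_mult Y Q = ps_mult Q (ps_const bsj)" unfolding Y_def
    using lQ lb by (simp add: ps_assoc lin_ps_mult lin_ps_const PQ ps_one_right)
  show ?thesis
  proof (rule cancel_right[OF _ _ lQ QP])
    show "lin_ps (ps_sub Y (ps_const bsj))" using lX lb by (intro lin_ps_sub lin_ps_const)
    show "lin_ps (ps_v (ps_mult (ps_const bst) (ps_sub (ps_mult (ps_const bsj) X) ps_one)))"
      using lD by (intro lin_ps_v)
    have "ps_mult (ps_v (ps_mult (ps_const bst) (ps_sub (ps_mult (ps_const bsj) X) ps_one))) Q
      = ps_v (ps_mult (ps_const bst) (ps_sub (ps_mult (ps_const bsj) (ps_mult Q (ps_const bj))) Q))"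
      using lD lb lX by (simp add: ps_v_left ps_assoc lin_ps_const ps_sub_left ps_one_left XQ)
    moreover have lS: "lin_ps (ps_sub (ps_mult (ps_const bsj) (ps_mult Q (ps_const bj))) Q)"
      using lQ lb by (intro lin_ps_sub lin_ps_mult lin_ps_const)
    ultimately show "ps_mult (ps_sub Y (ps_const bsj)) Q = ps_mult (ps_v (ps_mult (ps_const bst) (ps_sub (ps_mult (ps_const bsj) X) ps_one))) Q"
      unfolding ps_sub_left YQ
      by (intro ext) (simp add: ps_sub_app ps_sub_fun ps_v_app ps_const_right[OF lQ] ps_const_right_fun[OF lQ] ps_const_left star)
  qed
qed

fun pr :: "nat \<Rightarrow> nat \<Rightarrow> K" where
  "pr x 0 = 1"
| "pr x (Suc a) = (1 - qq ^ (2 * x)) * pr (x - 1) a"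

definition wfac :: "nat \<Rightarrow> nat \<Rightarrow> K" where "wfac x a = (if a \<le> x then pr x a else 0)"

definition Wc :: "nat \<Rightarrow> (nat \<Rightarrow> nat) \<Rightarrow> cfg \<Rightarrow> K" where
  "Wc n \<alpha> m = (\<Prod>i\<in>{1..n}. wfac (m i) (\<alpha> (prevs n i)))"

definition Wsh :: "nat \<Rightarrow> (nat \<Rightarrow> nat) \<Rightarrow> cfg \<Rightarrow> cfg" where
  "Wsh n \<alpha> m = (\<lambda>i. if i \<in> {1..n} then m i - \<alpha> (prevs n i) + \<alpha> i else m i)"

lemma bet_pow: "(bet j ^^ k) f m = f (m(j := m j + k))"
  by (induction k arbitrary: m) (auto simp: bet_def)

lemma wfac_Suc: "wfac x (Suc a) = (if x = 0 then 0 else (1 - qq^(2*x)) * wfac (x - 1) a)"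
  by (auto simp: wfac_def)

lemma betS_pow: "(betS j ^^ k) f m = wfac (m j) k * f (m(j := m j - k))"
proof (induction k arbitrary: m)
  case 0 then show ?case by (simp add: wfac_def)
next
  case (Suc k)
  have "(betS j ^^ Suc k) f m = betS j ((betS j ^^ k) f) m" by simp
  also have "\<dots> = (if m j = 0 then 0 else (1 - qq ^ (2 * m j)) * (betS j ^^ k) f (m(j := m j - 1)))"
    by (simp only: betS_def)
  also have "\<dots> = wfac (m j) (Suc k) * f (m(j := m j - Suc k))"
  proof (cases "m j = 0")
    case True then show ?thesis by (simp add: wfac_def)
  next
    case False
    have "(m(j := m j - 1))(j := (m(j := m j - 1)) j - k) = m(j := m j - Suc k)" by simp
    then show ?thesis using False by (simp only: Suc.IH wfac_Suc) simp
  qed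
  finally show ?case .
qed

lemma pair_app: "i \<noteq> j \<Longrightarrow> (bet i \<circ> betS j) g m = (if m j = 0 then 0 else (1 - qq ^ (2 * m j)) * g (m(i := m i + 1, j := m j - 1)))"
  by (simp add: bet_def betS_def)

lemma pair_pow: "i \<noteq> j \<Longrightarrow> ((bet i \<circ> betS j) ^^ k) f m = wfac (m j) k * f (m(i := m i + k, j := m j - k))"
proof (induction k arbitrary: m)
  case 0 then show ?case by (simp add: wfac_def)
next
  case (Suc k)
  have "((bet i \<circ> betS j) ^^ Suc k) f m = (bet i \<circ> betS j) (((bet i \<circ> betS j) ^^ k) f) m"
    by (simp only: funpow.simps comp_apply)
  also have "\<dots> = (if m j = 0 then 0 else (1 - qq ^ (2 * m j)) * ((bet i \<circ> betS j) ^^ k) f (m(i := m i + 1, j := m j - 1)))"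
    by (rule pair_app[OF Suc.prems])
  also have "\<dots> = wfac (m j) (Suc k) * f (m(i := m i + Suc k, j := m j - Suc k))"
  proof (cases "m j = 0")
    case True then show ?thesis by (simp add: wfac_def)
  next
    case False
    have "(m(i := m i + 1, j := m j - 1))(i := (m(i := m i + 1, j := m j - 1)) i + k,
        j := (m(i := m i + 1, j := m j - 1)) j - k) = m(i := m i + Suc k, j := m j - Suc k)"
      using Suc.prems by (auto simp: fun_eq_iff)
    then show ?thesis using False by (simp only: Suc.IH[OF Suc.prems] wfac_Suc) simp
  qed
  finally show ?case .
qed

definition tau :: "nat \<Rightarrow> (nat \<Rightarrow> nat) \<Rightarrow> nat \<Rightarrow> cfg \<Rightarrow> cfg" where
  "tau n \<alpha> a m = (\<lambda>t. (if a < t \<and> t \<le> n then m t - \<alpha> (t-1) else m t) + (if a \<le> t \<and> t < n then \<alpha> t else 0))"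

lemma foldr_formula:
  assumes "1 \<le> a" "a \<le> n"
  shows "foldr (\<lambda>i acc. ((bet i \<circ> betS (Suc i)) ^^ \<alpha> i) \<circ> acc) [a..<n] id f m
    = (\<Prod>i\<in>{a..<n}. wfac (m (Suc i)) (\<alpha> i)) * f (tau n \<alpha> a m)"
  using assms
proof (induction "n - a" arbitrary: a m)
  case 0
  then have "a = n" by simp
  moreover have "tau n \<alpha> n m = m" by (auto simp: tau_def fun_eq_iff)
  ultimately show ?case by simp
next
  case (Suc d)
  then have an: "a < n" by simp
  have ih: "foldr (\<lambda>i acc. ((bet i \<circ> betS (Suc i)) ^^ \<alpha> i) \<circ> acc) [Suc a..<n] id f m'
    = (\<Prod>i\<in>{Suc a..<n}. wfac (m' (Suc i)) (\<alpha> i)) * f (tau n \<alpha> (Suc a) m')" for m'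
    using Suc by simp
  define m' where "m' = m(a := m a + \<alpha> a, Suc a := m (Suc a) - \<alpha> a)"
  have e1: "(\<Prod>i\<in>{Suc a..<n}. wfac (m' (Suc i)) (\<alpha> i)) = (\<Prod>i\<in>{Suc a..<n}. wfac (m (Suc i)) (\<alpha> i))"
    by (intro prod.cong) (auto simp: m'_def)
  have e2: "tau n \<alpha> (Suc a) m' = tau n \<alpha> a m"
    using an apply (auto simp: tau_def m'_def fun_eq_iff)
    apply (subgoal_tac "x = Suc a")
     apply simp
    apply linarith
    done
  have e3: "{a..<n} = insert a {Suc a..<n}" using an by auto
  show ?case
    using an by (simp add: upt_conv_Cons pair_pow ih[of m', folded m'_def] e1 e2 e3 m'_def[symmetric])
qed

lemma Qword_formula:
  assumes n: "1 \<le> n"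
  shows "Qword n \<alpha> f m = Wc n \<alpha> m * f (Wsh n \<alpha> m)"
proof -
  define m1 where "m1 = m(1 := m 1 - \<alpha> n)"
  have "Qword n \<alpha> f m = (betS 1 ^^ \<alpha> n)
      (foldr (\<lambda>i acc. ((bet i \<circ> betS (Suc i)) ^^ \<alpha> i) \<circ> acc) [1..<n] id ((bet n ^^ \<alpha> n) f)) m"
    by (simp add: Qword_def)
  also have "\<dots> = wfac (m 1) (\<alpha> n) * ((\<Prod>i\<in>{1..<n}. wfac (m1 (Suc i)) (\<alpha> i)) *
       f ((tau n \<alpha> 1 m1)(n := tau n \<alpha> 1 m1 n + \<alpha> n)))"
    by (simp only: betS_pow foldr_formula[OF order_refl n] bet_pow m1_def)
  also have "(\<Prod>i\<in>{1..<n}. wfac (m1 (Suc i)) (\<alpha> i)) = (\<Prod>i\<in>{1..<n}. wfac (m (Suc i)) (\<alpha> i))"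
    by (intro prod.cong) (auto simp: m1_def)
  also have "(tau n \<alpha> 1 m1)(n := tau n \<alpha> 1 m1 n + \<alpha> n) = Wsh n \<alpha> m"
    using n by (auto simp: fun_eq_iff tau_def m1_def Wsh_def prevs_def)
  finally have Q1: "Qword n \<alpha> f m = wfac (m 1) (\<alpha> n) * ((\<Prod>i\<in>{1..<n}. wfac (m (Suc i)) (\<alpha> i)) * f (Wsh n \<alpha> m))" .
  have W: "wfac (m 1) (\<alpha> n) * (\<Prod>i\<in>{1..<n}. wfac (m (Suc i)) (\<alpha> i)) = Wc n \<alpha> m"
  proof -
    have s: "{1..n} = insert 1 (Suc ` {1..<n})" using n by (auto simp: image_iff)
    have "(\<Prod>i\<in>Suc ` {1..<n}. wfac (m i) (\<alpha> (prevs n i))) = (\<Prod>i\<in>{1..<n}. wfac (m (Suc i)) (\<alpha> (prevs n (Suc i))))"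
      by (subst prod.reindex) auto
    also have "\<dots> = (\<Prod>i\<in>{1..<n}. wfac (m (Suc i)) (\<alpha> i))"
      by (intro prod.cong) (auto simp: prevs_def)
    finally show ?thesis unfolding Wc_def s
      by (subst prod.insert) (auto simp: prevs_def)
  qed
  show ?thesis using Q1 W by (simp add: mult.assoc[symmetric])
qed

definition cc :: "nat \<Rightarrow> nat \<Rightarrow> (nat \<Rightarrow> nat) \<Rightarrow> K" where
  "cc n r \<alpha> = (-1) ^ r * inverse (\<Prod>i=1..n. qpoch (\<alpha> i))"

lemma Qcoef_formula:
  assumes "1 \<le> n"
  shows "Qcoef n r f m = (\<Sum>\<alpha>\<in>comps n r. cc n r \<alpha> * (Wc n \<alpha> m * f (Wsh n \<alpha> m)))"
  by (simp add: Qcoef_def op_smul_def op_sum_def Qword_formula[OF assms] cc_def sum_distrib_left mult.assoc)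

lemma pr_Suc_right: "a < x \<Longrightarrow> pr x (Suc a) = pr x a * (1 - qq ^ (2 * (x - a)))"
proof (induction a arbitrary: x)
  case 0 then show ?case by simp
next
  case (Suc a)
  have "pr x (Suc (Suc a)) = (1 - qq ^ (2 * x)) * pr (x - 1) (Suc a)" by simp
  also have "\<dots> = (1 - qq ^ (2 * x)) * (pr (x - 1) a * (1 - qq ^ (2 * (x - 1 - a))))"
    using Suc by (subst Suc.IH) auto
  finally show ?case using Suc.prems by (simp add: mult.assoc)
qed

lemma wfac_0[simp]: "wfac x 0 = 1" by (simp add: wfac_def)

lemma wfac_Suc_right: "wfac x (Suc a) = (if a < x then wfac x a * (1 - qq ^ (2 * (x - a))) else 0)"
  by (auto simp: wfac_def pr_Suc_right simp del: pr.simps(2))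

lemma wfac_SS: "wfac (Suc x) (Suc a) = (1 - qq ^ (2 * Suc x)) * wfac x a"
  by (simp add: wfac_Suc)

lemma scal_star:
  "wfac x (Suc a) - wfac (Suc x) (Suc a) = - (1 - qq ^ (2 * Suc a)) * (wfac x a - wfac x (Suc a))"
proof -
  consider "a < x" | "a = x" | "x < a" by linarith
  then show ?thesis
  proof cases
    case 1
    have e: "qq ^ (2 * (x - a)) * qq ^ (2 * Suc a) = qq ^ (2 * Suc x)"
    proof -
      have "2 * (x - a) + 2 * Suc a = 2 * Suc x" using 1 by simp
      then show ?thesis by (simp only: power_add[symmetric])
    qed
    have h1: "wfac x (Suc a) = wfac x a * (1 - qq ^ (2 * (x - a)))" using 1 by (simp add: wfac_Suc_right)
    have h2: "wfac (Suc x) (Suc a) = (1 - qq ^ (2 * (x - a)) * qq ^ (2 * Suc a)) * wfac x a"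
      by (simp only: wfac_SS e)
    have r: "\<And>w Q1 Q2::K. w*(1-Q1) - (1-Q1*Q2)*w = -(1-Q2)*(w - w*(1-Q1))" by (simp add: algebra_simps)
    show ?thesis by (simp only: h1 h2 r)
  next
    case 2
    have h1: "wfac x (Suc x) = 0" by (simp add: wfac_Suc_right)
    show ?thesis unfolding 2 by (simp only: h1 wfac_SS) (simp add: algebra_simps)
  next
    case 3 then show ?thesis by (simp add: wfac_SS wfac_Suc_right wfac_def)
  qed
qed

lemma prevs_in: "1 \<le> n \<Longrightarrow> i \<in> {1..n} \<Longrightarrow> prevs n i \<in> {1..n}"
  by (auto simp: prevs_def)
lemma nexts_in: "1 \<le> n \<Longrightarrow> i \<in> {1..n} \<Longrightarrow> nexts n i \<in> {1..n}"
  by (auto simp: nexts_def)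
lemma prevs_inj: "i \<in> {1..n} \<Longrightarrow> k \<in> {1..n} \<Longrightarrow> prevs n i = prevs n k \<longleftrightarrow> i = k"
  by (auto simp: prevs_def)
lemma prevs_nexts: "i \<in> {1..n} \<Longrightarrow> prevs n (nexts n i) = i"
  by (auto simp: prevs_def nexts_def)
lemma prevs_fix: "i \<in> {1..n} \<Longrightarrow> prevs n i = i \<longleftrightarrow> n = 1"
  by (auto simp: prevs_def)
lemma nexts_fix: "i \<in> {1..n} \<Longrightarrow> nexts n i = i \<longleftrightarrow> n = 1"
  by (auto simp: nexts_def)

lemma Wc_split: "j \<in> {1..n} \<Longrightarrow>
  Wc n \<beta> mm = wfac (mm j) (\<beta> (prevs n j)) * (\<Prod>i\<in>{1..n}-{j}. wfac (mm i) (\<beta> (prevs n i)))"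
  unfolding Wc_def by (subst prod.remove[of _ j]) auto

lemma Wsh_in: "i \<in> {1..n} \<Longrightarrow> Wsh n \<alpha> m i = m i - \<alpha> (prevs n i) + \<alpha> i"
  by (simp add: Wsh_def)
lemma Wsh_out: "i \<notin> {1..n} \<Longrightarrow> Wsh n \<alpha> m i = m i"
  unfolding Wsh_def by (auto simp only: if_False)

lemma term_star:
  fixes \<alpha> :: "nat \<Rightarrow> nat" and m :: cfg and f :: vec
  assumes n: "1 \<le> n" and j: "j \<in> {1..n}"
  defines "p \<equiv> prevs n j"
  defines "\<alpha>' \<equiv> \<alpha>(p := Suc (\<alpha> p))"
  defines "m4 \<equiv> m(j := m j - 1)"
  defines "g \<equiv> (Wsh n \<alpha> m4)(j := Suc (Wsh n \<alpha> m4 j))"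
  shows "Wc n \<alpha>' m * f ((Wsh n \<alpha>' m)(j := Suc (Wsh n \<alpha>' m j)))
         - Wc n \<alpha>' (m(j := Suc (m j))) * f (Wsh n \<alpha>' (m(j := Suc (m j))))
    = - (1 - qq ^ (2 * Suc (\<alpha> p))) *
      (Wc n \<alpha> m * f ((Wsh n \<alpha> m)(p := Suc (Wsh n \<alpha> m p)))
       - (if m j = 0 then 0 else (1 - qq ^ (2 * m j)) * (Wc n \<alpha> m4 * f (g(p := Suc (g p))))))"
proof -
  define x where "x = m j"
  define a where "a = \<alpha> p"
  define R where "R = (\<Prod>i\<in>{1..n}-{j}. wfac (m i) (\<alpha> (prevs n i)))"
  define U where "U = Wsh n \<alpha>' (m(j := Suc (m j)))"
  have pin: "p \<in> {1..n}" unfolding p_def by (rule prevs_in[OF n j])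
  have pj: "prevs n j = p" by (simp add: p_def)
  have pp: "p \<noteq> j \<Longrightarrow> prevs n p \<noteq> p" using pin prevs_fix[OF j] prevs_fix[OF pin] p_def by auto
  have pne: "i \<in> {1..n} \<Longrightarrow> i \<noteq> j \<Longrightarrow> prevs n i \<noteq> p" for i using j by (simp add: p_def prevs_inj)
  have rest: "(\<Prod>i\<in>{1..n}-{j}. wfac (mm i) (\<beta> (prevs n i))) = R"
    if "\<And>i. i \<noteq> j \<Longrightarrow> mm i = m i" "\<And>i. i \<in> {1..n} \<Longrightarrow> i \<noteq> j \<Longrightarrow> \<beta> (prevs n i) = \<alpha> (prevs n i)" for mm \<beta>
    unfolding R_def by (intro prod.cong) (use that in auto)
  have c1: "Wc n \<alpha>' m = wfac x (Suc a) * R"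
    by (subst Wc_split[OF j], subst rest) (auto simp: \<alpha>'_def pne x_def a_def p_def[symmetric])
  have c2: "Wc n \<alpha>' (m(j := Suc (m j))) = wfac (Suc x) (Suc a) * R"
    by (subst Wc_split[OF j], subst rest) (auto simp: \<alpha>'_def pne x_def a_def p_def[symmetric])
  have c3: "Wc n \<alpha> m = wfac x a * R"
    by (subst Wc_split[OF j], subst rest) (auto simp: x_def a_def p_def[symmetric])
  have c4: "Wc n \<alpha> m4 = wfac (x - 1) a * R"
    by (subst Wc_split[OF j], subst rest) (auto simp: m4_def x_def a_def p_def[symmetric])
  have p1: "(Wsh n \<alpha>' m)(j := Suc (Wsh n \<alpha>' m j)) = U" if "a < x"
    using that j pj by (auto simp: fun_eq_iff U_def Wsh_def \<alpha>'_def pne x_def a_def)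
  have p3: "(Wsh n \<alpha> m)(p := Suc (Wsh n \<alpha> m p)) = U" if "a \<le> x"
  proof (cases "p = j")
    case True
    have n1: "n = 1" using True pj prevs_fix[OF j] by simp
    then show ?thesis using that j True
      by (auto simp: fun_eq_iff U_def Wsh_def \<alpha>'_def x_def a_def p_def prevs_def)
  next
    case False
    then show ?thesis using that j pin pp
      by (auto simp: fun_eq_iff U_def Wsh_def \<alpha>'_def pne x_def a_def p_def[symmetric])
  qed
  have p4: "g(p := Suc (g p)) = U" if "0 < x" "a \<le> x - 1"
  proof (cases "p = j")
    case True
    have n1: "n = 1" using True pj prevs_fix[OF j] by simp
    then show ?thesis using that j True
      by (auto simp: fun_eq_iff U_def g_def m4_def Wsh_def \<alpha>'_def x_def a_def p_def prevs_def)
  next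
    case False
    then show ?thesis using that j pin pp
      by (auto simp: fun_eq_iff U_def g_def m4_def Wsh_def \<alpha>'_def pne x_def a_def p_def[symmetric])
  qed
  have t1: "Wc n \<alpha>' m * f ((Wsh n \<alpha>' m)(j := Suc (Wsh n \<alpha>' m j))) = wfac x (Suc a) * R * f U"
    using p1 by (cases "a < x") (auto simp: c1 wfac_def)
  have t2: "Wc n \<alpha>' (m(j := Suc (m j))) * f (Wsh n \<alpha>' (m(j := Suc (m j)))) = wfac (Suc x) (Suc a) * R * f U"
    by (simp add: c2 U_def)
  have t3: "Wc n \<alpha> m * f ((Wsh n \<alpha> m)(p := Suc (Wsh n \<alpha> m p))) = wfac x a * R * f U"
    using p3 by (cases "a \<le> x") (auto simp: c3 wfac_def)
  have t4: "(if m j = 0 then 0 else (1 - qq ^ (2 * m j)) * (Wc n \<alpha> m4 * f (g(p := Suc (g p)))))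
     = wfac x (Suc a) * R * f U"
    using p4 by (cases "0 < x \<and> a \<le> x - 1") (auto simp: c4 wfac_Suc x_def[symmetric] wfac_def)
  show ?thesis unfolding t1 t2 t3 t4 a_def[symmetric]
    using arg_cong[OF scal_star[of x a], of "\<lambda>z. z * (R * f U)"] by (simp add: algebra_simps)
qed

lemma qq_pow: "qq ^ N = Fract ([:0, 1:] ^ N) 1"
  by (induction N) (simp_all add: qq_def One_fract_def)

lemma qq_pow_ne1: "N \<noteq> 0 \<Longrightarrow> 1 - qq ^ N \<noteq> 0"
proof
  assume N: "N \<noteq> 0" and h: "1 - qq ^ N = 0"
  then have "qq ^ N = 1" by simp
  then have "Fract (([:0, 1:] :: complex poly) ^ N) 1 = 1" by (simp add: qq_pow)
  then have "Fract (([:0, 1:] :: complex poly) ^ N) 1 = Fract 1 1" by (simp only: One_fract_def)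
  then have "([:0, 1:] :: complex poly) ^ N = 1" by (simp add: eq_fract)
  then have "degree (([:0, 1:] :: complex poly) ^ N) = 0" by simp
  then show False using N degree_linear_power[of "0::complex" N] by simp
qed

lemma qpoch_Suc: "qpoch (Suc k) = qpoch k * (1 - qq ^ (2 * Suc k))"
  by (simp add: qpoch_def)

lemma comps_fin: "finite (comps n r)"
proof -
  have "comps n r \<subseteq> {f. \<forall>x. (x \<in> {1..n} \<longrightarrow> f x \<in> {..r}) \<and> (x \<notin> {1..n} \<longrightarrow> f x = 0)}"
  proof -
    have le: "\<alpha> x \<le> r" if a: "\<alpha> \<in> comps n r" and x: "x \<in> {1..n}" for \<alpha> x
    proof -
      have "\<alpha> x \<le> (\<Sum>i=1..n. \<alpha> i)" using x by (intro member_le_sum) auto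
      then show ?thesis using a by (simp add: comps_def)
    qed
    show ?thesis using le by (auto simp: comps_def)
  qed
  then show ?thesis by (rule finite_subset) (rule finite_set_of_finite_funs; simp)
qed

lemma sum_upd: fixes \<alpha> :: "nat \<Rightarrow> nat" shows "p \<in> {1..n} \<Longrightarrow> (\<Sum>i=1..n. (\<alpha>(p := v)) i) = (\<Sum>i=1..n. \<alpha> i) - \<alpha> p + v"
proof -
  assume p: "p \<in> {1..n}"
  have "(\<Sum>i=1..n. (\<alpha>(p := v)) i) = v + (\<Sum>i\<in>{1..n}-{p}. \<alpha> i)"
    using p by (subst sum.remove[of _ p]) (auto intro!: sum.cong)
  moreover have "(\<Sum>i=1..n. \<alpha> i) = \<alpha> p + (\<Sum>i\<in>{1..n}-{p}. \<alpha> i)"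
    using p by (subst sum.remove[of _ p]) auto
  ultimately show ?thesis by simp
qed

lemma comps_split:
  assumes p: "p \<in> {1..n}"
  shows "comps n (Suc s) = {\<alpha>\<in>comps n (Suc s). \<alpha> p = 0} \<union> (\<lambda>\<alpha>. \<alpha>(p := Suc (\<alpha> p))) ` comps n s"
proof (intro equalityI subsetI)
  fix \<beta> assume b: "\<beta> \<in> comps n (Suc s)"
  show "\<beta> \<in> {\<alpha>\<in>comps n (Suc s). \<alpha> p = 0} \<union> (\<lambda>\<alpha>. \<alpha>(p := Suc (\<alpha> p))) ` comps n s"
  proof (cases "\<beta> p = 0")
    case False
    define \<alpha> where "\<alpha> = \<beta>(p := \<beta> p - 1)"
    have "\<beta> = \<alpha>(p := Suc (\<alpha> p))" using False by (auto simp: \<alpha>_def)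
    moreover have "\<alpha> \<in> comps n s"
    proof -
      have "\<beta> p \<le> (\<Sum>i=1..n. \<beta> i)" using p by (intro member_le_sum) auto
      moreover have "(\<Sum>i=1..n. \<alpha> i) = (\<Sum>i=1..n. \<beta> i) - \<beta> p + (\<beta> p - 1)"
        unfolding \<alpha>_def by (rule sum_upd[OF p])
      ultimately have S: "(\<Sum>i=1..n. \<alpha> i) = s" using b False by (simp add: comps_def)
      have O: "\<forall>i. i \<notin> {1..n} \<longrightarrow> \<alpha> i = 0" using b p by (auto simp: comps_def \<alpha>_def)
      show ?thesis using S O by (simp add: comps_def)
    qed
    ultimately show ?thesis by blast
  qed (use b in auto)
next
  fix \<beta> assume "\<beta> \<in> {\<alpha>\<in>comps n (Suc s). \<alpha> p = 0} \<union> (\<lambda>\<alpha>. \<alpha>(p := Suc (\<alpha> p))) ` comps n s"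
  then show "\<beta> \<in> comps n (Suc s)"
  proof
    assume "\<beta> \<in> (\<lambda>\<alpha>. \<alpha>(p := Suc (\<alpha> p))) ` comps n s"
    then obtain \<alpha> where a: "\<alpha> \<in> comps n s" "\<beta> = \<alpha>(p := Suc (\<alpha> p))" by auto
    have "\<alpha> p \<le> (\<Sum>i=1..n. \<alpha> i)" using p by (intro member_le_sum) auto
    moreover have "(\<Sum>i=1..n. \<beta> i) = (\<Sum>i=1..n. \<alpha> i) - \<alpha> p + Suc (\<alpha> p)"
      unfolding a(2) by (rule sum_upd[OF p])
    ultimately have S: "(\<Sum>i=1..n. \<beta> i) = Suc s" using a(1) by (simp add: comps_def)
    have O: "\<forall>i. i \<notin> {1..n} \<longrightarrow> \<beta> i = 0" using a p by (auto simp: comps_def)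
    show ?thesis using S O by (simp add: comps_def)
  qed auto
qed

lemma cc_upd:
  assumes p: "p \<in> {1..n}"
  shows "cc n (Suc s) (\<alpha>(p := Suc (\<alpha> p))) * (- (1 - qq ^ (2 * Suc (\<alpha> p)))) = cc n s \<alpha>"
proof -
  have "(\<Prod>i=1..n. qpoch ((\<alpha>(p := Suc (\<alpha> p))) i)) = qpoch (Suc (\<alpha> p)) * (\<Prod>i\<in>{1..n}-{p}. qpoch (\<alpha> i))"
    using p by (subst prod.remove[of _ p]) (auto intro!: prod.cong)
  also have "\<dots> = (1 - qq ^ (2 * Suc (\<alpha> p))) * (\<Prod>i=1..n. qpoch (\<alpha> i))"
    using p by (subst (2) prod.remove[of _ p]) (auto simp: qpoch_Suc)
  finally have e: "(\<Prod>i=1..n. qpoch ((\<alpha>(p := Suc (\<alpha> p))) i)) = (1 - qq ^ (2 * Suc (\<alpha> p))) * (\<Prod>i=1..n. qpoch (\<alpha> i))" .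
  have d: "1 - qq ^ (2 * Suc (\<alpha> p)) \<noteq> 0" by (rule qq_pow_ne1) simp
  have g: "\<And>(P::K) D. D \<noteq> 0 \<Longrightarrow> (-1) ^ Suc s * inverse (D * P) * (- D) = (-1) ^ s * inverse P"
    by (simp add: inverse_mult_distrib)
  show ?thesis unfolding cc_def e using g[OF d] .
qed

lemma sum_split_shift:
  assumes p: "p \<in> {1..n}" and z: "\<And>\<alpha>. \<alpha> \<in> comps n (Suc s) \<Longrightarrow> \<alpha> p = 0 \<Longrightarrow> T \<alpha> = 0"
  shows "(\<Sum>\<alpha>\<in>comps n (Suc s). T \<alpha>) = (\<Sum>\<alpha>\<in>comps n s. T (\<alpha>(p := Suc (\<alpha> p))))"
proof -
  let ?Z = "{\<alpha>\<in>comps n (Suc s). \<alpha> p = 0}" and ?I = "(\<lambda>\<alpha>. \<alpha>(p := Suc (\<alpha> p))) ` comps n s"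
  have inj: "inj_on (\<lambda>\<alpha>. \<alpha>(p := Suc (\<alpha> p))) (comps n s)"
  proof (rule inj_onI)
    fix a b assume "a(p := Suc (a p)) = b(p := Suc (b p))"
    then have "(a(p := Suc (a p)))(p := a p) = (b(p := Suc (b p)))(p := b p)"
      by (metis fun_upd_same nat.inject)
    then show "a = b" by simp
  qed
  have "(\<Sum>\<alpha>\<in>comps n (Suc s). T \<alpha>) = (\<Sum>\<alpha>\<in>?Z \<union> ?I. T \<alpha>)"
    using comps_split[OF p, of s] by simp
  also have "\<dots> = (\<Sum>\<alpha>\<in>?Z. T \<alpha>) + (\<Sum>\<alpha>\<in>?I. T \<alpha>)"
    by (rule sum.union_disjoint) (auto simp: comps_fin)
  also have "(\<Sum>\<alpha>\<in>?Z. T \<alpha>) = 0" using z by simp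
  also have "(\<Sum>\<alpha>\<in>?I. T \<alpha>) = (\<Sum>\<alpha>\<in>comps n s. T (\<alpha>(p := Suc (\<alpha> p))))"
    by (subst sum.reindex[OF inj]) simp
  finally show ?thesis by simp
qed

lemma term_star_zero:
  assumes n: "1 \<le> n" and j: "j \<in> {1..n}" and z: "\<alpha> (prevs n j) = 0"
  shows "Wc n \<alpha> m * f ((Wsh n \<alpha> m)(j := Suc (Wsh n \<alpha> m j)))
         = Wc n \<alpha> (m(j := Suc (m j))) * f (Wsh n \<alpha> (m(j := Suc (m j))))"
proof -
  have "Wc n \<alpha> (m(j := Suc (m j))) = Wc n \<alpha> m"
    using j z by (simp add: Wc_split[OF j])
  moreover have "(Wsh n \<alpha> m)(j := Suc (Wsh n \<alpha> m j)) = Wsh n \<alpha> (m(j := Suc (m j)))"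
    using j z by (auto simp: fun_eq_iff Wsh_def)
  ultimately show ?thesis by simp
qed

lemma star_sum:
  assumes n: "1 \<le> n" and j: "j \<in> {1..n}"
  defines "p \<equiv> prevs n j"
  shows "Qcoef n (Suc s) (bet j f) m - bet j (Qcoef n (Suc s) f) m
       = Qcoef n s (bet p f) m - betS j (Qcoef n s (bet j (bet p f))) m"
proof -
  have pin: "p \<in> {1..n}" unfolding p_def by (rule prevs_in[OF n j])
  define T where "T = (\<lambda>\<alpha>. cc n (Suc s) \<alpha> * (Wc n \<alpha> m * f ((Wsh n \<alpha> m)(j := Suc (Wsh n \<alpha> m j)))
         - Wc n \<alpha> (m(j := Suc (m j))) * f (Wsh n \<alpha> (m(j := Suc (m j))))))"
  have "Qcoef n (Suc s) (bet j f) m - bet j (Qcoef n (Suc s) f) m = (\<Sum>\<alpha>\<in>comps n (Suc s). T \<alpha>)"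
    unfolding T_def bet_def Qcoef_formula[OF n]
    by (simp only: sum_subtractf[symmetric] right_diff_distrib)
  also have "\<dots> = (\<Sum>\<alpha>\<in>comps n s. T (\<alpha>(p := Suc (\<alpha> p))))"
    by (rule sum_split_shift[OF pin]) (simp add: T_def term_star_zero[OF n j] p_def)
  also have "\<dots> = (\<Sum>\<alpha>\<in>comps n s. cc n s \<alpha> *
      (Wc n \<alpha> m * f ((Wsh n \<alpha> m)(p := Suc (Wsh n \<alpha> m p)))
       - (if m j = 0 then 0 else (1 - qq ^ (2 * m j)) * (Wc n \<alpha> (m(j := m j - 1)) *
           f (((Wsh n \<alpha> (m(j := m j - 1)))(j := Suc (Wsh n \<alpha> (m(j := m j - 1)) j)))
              (p := Suc (((Wsh n \<alpha> (m(j := m j - 1)))(j := Suc (Wsh n \<alpha> (m(j := m j - 1)) j))) p)))))))"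
  proof (intro sum.cong refl)
    fix \<alpha> assume "\<alpha> \<in> comps n s"
    show "T (\<alpha>(p := Suc (\<alpha> p))) = cc n s \<alpha> *
      (Wc n \<alpha> m * f ((Wsh n \<alpha> m)(p := Suc (Wsh n \<alpha> m p)))
       - (if m j = 0 then 0 else (1 - qq ^ (2 * m j)) * (Wc n \<alpha> (m(j := m j - 1)) *
           f (((Wsh n \<alpha> (m(j := m j - 1)))(j := Suc (Wsh n \<alpha> (m(j := m j - 1)) j)))
              (p := Suc (((Wsh n \<alpha> (m(j := m j - 1)))(j := Suc (Wsh n \<alpha> (m(j := m j - 1)) j))) p))))))"
      unfolding T_def term_star[OF n j, of \<alpha> m f, folded p_def] cc_upd[OF pin, of s \<alpha>, symmetric]
      by (simp only: mult.assoc)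
  qed
  also have "\<dots> = Qcoef n s (bet p f) m - betS j (Qcoef n s (bet j (bet p f))) m"
    unfolding Qcoef_formula[OF n]
    unfolding bet_def betS_def Qcoef_formula[OF n]
    unfolding bet_def betS_def Qcoef_formula[OF n]
    by (cases "m j = 0") (simp_all add: sum_subtractf right_diff_distrib sum_distrib_left mult_ac)
  finally show ?thesis .
qed

lemma scal_ss2:
  "wfac x a * (1 - qq ^ (2 * (x - a + Suc b))) - wfac x (Suc a) = - (1 - qq ^ (2 * Suc b)) * (wfac x (Suc a) - wfac x a)"
proof -
  consider "a < x" | "a = x" | "x < a" by linarith
  then show ?thesis
  proof cases
    case 1
    have e: "qq ^ (2 * (x - a + Suc b)) = qq ^ (2 * (x - a)) * qq ^ (2 * Suc b)"
      by (simp only: power_add[symmetric] add_mult_distrib2)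
    have h1: "wfac x (Suc a) = wfac x a * (1 - qq ^ (2 * (x - a)))" using 1 by (simp add: wfac_Suc_right)
    have r: "\<And>w Q1 Q2::K. w * (1 - Q1 * Q2) - w*(1-Q1) = -(1-Q2)*(w*(1-Q1) - w)" by (simp add: algebra_simps)
    show ?thesis by (simp only: h1 e r)
  next
    case 2
    have h1: "wfac x (Suc x) = 0" by (simp add: wfac_Suc_right)
    show ?thesis unfolding 2 by (simp only: h1) (simp add: algebra_simps)
  next
    case 3 then show ?thesis by (simp add: wfac_Suc_right wfac_def)
  qed
qed

lemma Wc_split2:
  assumes j: "j \<in> {1..n}" and t: "t \<in> {1..n}" and tj: "t \<noteq> j"
  shows "Wc n \<beta> mm = wfac (mm j) (\<beta> (prevs n j)) * wfac (mm t) (\<beta> (prevs n t)) *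
     (\<Prod>i\<in>{1..n}-{j}-{t}. wfac (mm i) (\<beta> (prevs n i)))"
proof -
  have "(\<Prod>i\<in>{1..n}-{j}. wfac (mm i) (\<beta> (prevs n i))) = wfac (mm t) (\<beta> (prevs n t)) *
     (\<Prod>i\<in>{1..n}-{j}-{t}. wfac (mm i) (\<beta> (prevs n i)))"
    using t tj by (subst prod.remove[of _ t]) auto
  then show ?thesis by (simp add: Wc_split[OF j] mult.assoc)
qed

lemma term_ss2:
  fixes \<alpha> :: "nat \<Rightarrow> nat" and m :: cfg and f :: vec
  assumes n: "2 \<le> n" and j: "j \<in> {1..n}"
  defines "t \<equiv> nexts n j"
  defines "\<alpha>' \<equiv> \<alpha>(j := Suc (\<alpha> j))"
  defines "m4 \<equiv> m(j := m j - 1)"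
  defines "m' \<equiv> m(t := m t - 1)"
  defines "m'' \<equiv> m'(j := m' j - 1)"
  defines "w \<equiv> Wsh n \<alpha>' m"
  shows "Wc n \<alpha>' m * (if w j = 0 then 0 else (1 - qq ^ (2 * w j)) * f (w(j := w j - 1)))
     - (if m j = 0 then 0 else (1 - qq ^ (2 * m j)) * (Wc n \<alpha>' m4 * f (Wsh n \<alpha>' m4)))
    = - (1 - qq ^ (2 * Suc (\<alpha> j))) * (if m t = 0 then 0 else (1 - qq ^ (2 * m t)) *
       ((if m' j = 0 then 0 else (1 - qq ^ (2 * m' j)) * (Wc n \<alpha> m'' * f ((Wsh n \<alpha> m'')(j := Suc (Wsh n \<alpha> m'' j)))))
        - Wc n \<alpha> m' * f (Wsh n \<alpha> m')))"
proof -
  have n1: "1 \<le> n" using n by simp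
  define p where "p = prevs n j"
  have tin: "t \<in> {1..n}" unfolding t_def by (rule nexts_in[OF n1 j])
  have tj: "t \<noteq> j" using nexts_fix[OF j] n by (simp add: t_def)
  have pt: "prevs n t = j" by (simp add: t_def prevs_nexts[OF j])
  have pin: "p \<in> {1..n}" unfolding p_def by (rule prevs_in[OF n1 j])
  have pj: "p \<noteq> j" using prevs_fix[OF j] n by (simp add: p_def)
  have pne: "i \<in> {1..n} \<Longrightarrow> i \<noteq> t \<Longrightarrow> prevs n i \<noteq> j" for i
    using pt prevs_inj[OF _ tin] by metis
  define x where "x = m j"
  define y where "y = m t"
  define a where "a = \<alpha> p"
  define b where "b = \<alpha> j"
  define R where "R = (\<Prod>i\<in>{1..n}-{j}-{t}. wfac (m i) (\<alpha> (prevs n i)))"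
  define U where "U = Wsh n \<alpha> m'"
  have rest: "(\<Prod>i\<in>{1..n}-{j}-{t}. wfac (mm i) (\<beta> (prevs n i))) = R"
    if "\<And>i. i \<noteq> j \<Longrightarrow> i \<noteq> t \<Longrightarrow> mm i = m i"
       "\<And>i. i \<in> {1..n} \<Longrightarrow> i \<noteq> j \<Longrightarrow> i \<noteq> t \<Longrightarrow> \<beta> (prevs n i) = \<alpha> (prevs n i)" for mm \<beta>
    unfolding R_def by (intro prod.cong) (use that in auto)
  have W: "Wc n \<beta> mm = wfac (mm j) (\<beta> p) * wfac (mm t) (\<beta> j) * R"
    if "\<And>i. i \<noteq> j \<Longrightarrow> i \<noteq> t \<Longrightarrow> mm i = m i"
       "\<And>i. i \<in> {1..n} \<Longrightarrow> i \<noteq> j \<Longrightarrow> i \<noteq> t \<Longrightarrow> \<beta> (prevs n i) = \<alpha> (prevs n i)" for mm \<beta>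
    using rest[OF that] by (simp add: Wc_split2[OF j tin tj] pt p_def)
  have c1: "Wc n \<alpha>' m = wfac x a * wfac y (Suc b) * R"
    by (subst W) (auto simp: \<alpha>'_def pne x_def y_def a_def b_def pj)
  have c2: "Wc n \<alpha>' m4 = wfac (x - 1) a * wfac y (Suc b) * R"
    by (subst W) (auto simp: \<alpha>'_def m4_def pne x_def y_def a_def b_def pj tj)
  have c3: "Wc n \<alpha> m'' = wfac (x - 1) a * wfac (y - 1) b * R"
    by (subst W) (auto simp: m''_def m'_def x_def y_def a_def b_def tj tj[symmetric])
  have c4: "Wc n \<alpha> m' = wfac x a * wfac (y - 1) b * R"
    by (subst W) (auto simp: m'_def x_def y_def a_def b_def tj tj[symmetric])
  have wj: "w j = x - a + Suc b"
    using j by (simp add: w_def Wsh_def \<alpha>'_def x_def a_def b_def p_def[symmetric] pj)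
  have q1: "w(j := w j - 1) = U" if "a \<le> x" "b < y"
    using that j tin tj pt pne pj
    by (auto simp: fun_eq_iff w_def U_def Wsh_def \<alpha>'_def m'_def x_def y_def a_def b_def p_def[symmetric])
  have q2: "Wsh n \<alpha>' m4 = U" if "a < x" "b < y"
    using that j tin tj pt pne pj
    by (auto simp: fun_eq_iff m4_def U_def Wsh_def \<alpha>'_def m'_def x_def y_def a_def b_def p_def[symmetric])
  have q3: "(Wsh n \<alpha> m'')(j := Suc (Wsh n \<alpha> m'' j)) = U" if "a < x" "b < y"
    using that j tin tj pt pne pj
    by (auto simp: fun_eq_iff m''_def U_def Wsh_def m'_def x_def y_def a_def b_def p_def[symmetric])
  have m'j: "m' j = x" using tj by (simp add: m'_def x_def)
  have t1: "Wc n \<alpha>' m * (if w j = 0 then 0 else (1 - qq ^ (2 * w j)) * f (w(j := w j - 1)))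
       = wfac x a * wfac y (Suc b) * (1 - qq ^ (2 * (x - a + Suc b))) * R * f U"
    using q1 by (cases "a \<le> x \<and> b < y") (auto simp: c1 wj wfac_def)
  have t2: "(if m j = 0 then 0 else (1 - qq ^ (2 * m j)) * (Wc n \<alpha>' m4 * f (Wsh n \<alpha>' m4)))
       = wfac x (Suc a) * wfac y (Suc b) * R * f U"
    using q2 by (cases "a < x \<and> b < y") (auto simp: c2 x_def[symmetric] wfac_Suc wfac_def)
  have t3: "(if m t = 0 then 0 else (1 - qq ^ (2 * m t)) *
       ((if m' j = 0 then 0 else (1 - qq ^ (2 * m' j)) * (Wc n \<alpha> m'' * f ((Wsh n \<alpha> m'')(j := Suc (Wsh n \<alpha> m'' j)))))
        - Wc n \<alpha> m' * f (Wsh n \<alpha> m')))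
      = wfac y (Suc b) * (wfac x (Suc a) - wfac x a) * R * f U"
    using q3 by (cases "a < x \<and> b < y") (auto simp: c3 c4 m'j y_def[symmetric] U_def wfac_Suc wfac_def algebra_simps)
  show ?thesis unfolding t1 t2 t3 b_def[symmetric]
    using arg_cong[OF scal_ss2[of x a b], of "\<lambda>z. z * (wfac y (Suc b) * R * f U)"]
    by (simp add: algebra_simps)
qed

lemma term_ss1:
  fixes \<alpha> :: "nat \<Rightarrow> nat" and m :: cfg and f :: vec
  assumes n: "n = 1" and j: "j \<in> {1..n}"
  defines "t \<equiv> nexts n j"
  defines "\<alpha>' \<equiv> \<alpha>(j := Suc (\<alpha> j))"
  defines "m4 \<equiv> m(j := m j - 1)"
  defines "m' \<equiv> m(t := m t - 1)"
  defines "m'' \<equiv> m'(j := m' j - 1)"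
  defines "w \<equiv> Wsh n \<alpha>' m"
  shows "Wc n \<alpha>' m * (if w j = 0 then 0 else (1 - qq ^ (2 * w j)) * f (w(j := w j - 1)))
     - (if m j = 0 then 0 else (1 - qq ^ (2 * m j)) * (Wc n \<alpha>' m4 * f (Wsh n \<alpha>' m4)))
    = - (1 - qq ^ (2 * Suc (\<alpha> j))) * (if m t = 0 then 0 else (1 - qq ^ (2 * m t)) *
       ((if m' j = 0 then 0 else (1 - qq ^ (2 * m' j)) * (Wc n \<alpha> m'' * f ((Wsh n \<alpha> m'')(j := Suc (Wsh n \<alpha> m'' j)))))
        - Wc n \<alpha> m' * f (Wsh n \<alpha> m')))"
proof -
  have j1: "j = 1" using j n by simp
  have t1: "t = 1" using j1 n by (simp add: t_def nexts_def)
  have Wc1: "Wc n \<beta> mm = wfac (mm 1) (\<beta> 1)" for \<beta> mm by (simp add: Wc_def n prevs_def)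
  have Wsh1: "Wsh n \<beta> mm = mm(1 := mm 1 - \<beta> 1 + \<beta> 1)" for \<beta> mm
    by (auto simp: Wsh_def n prevs_def fun_eq_iff)
  define x where "x = m 1"
  define a where "a = \<alpha> 1"
  define U where "U = Wsh n \<alpha> m'"
  show ?thesis
  proof (cases x)
    case 0
    then show ?thesis by (simp add: j1 t1 x_def Wc1 \<alpha>'_def wfac_def w_def Wsh1)
  next
    case (Suc y)
    have mx: "m 1 = Suc y" "m (Suc 0) = Suc y" using Suc by (simp_all add: x_def)
    have ax: "\<alpha> 1 = a" "\<alpha> (Suc 0) = a" by (simp_all add: a_def)
    have A1: "Wc n \<alpha>' m * (if w j = 0 then 0 else (1 - qq ^ (2 * w j)) * f (w(j := w j - 1)))
      = (1 - qq ^ (2 * x)) * ((1 - qq ^ (2 * Suc y)) * wfac y a) * f U"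
    proof (cases "a < x")
      case True
      have "w(j := w j - 1) = U" using True Suc
        by (simp add: w_def U_def Wsh1 j1 t1 m'_def \<alpha>'_def x_def a_def)
      moreover have "w j = x" using True by (simp add: w_def Wsh1 j1 \<alpha>'_def x_def a_def)
      ultimately show ?thesis using Suc by (simp add: Wc1 j1 \<alpha>'_def mx ax wfac_SS)
    next
      case False
      then show ?thesis using Suc by (simp add: Wc1 j1 \<alpha>'_def mx ax wfac_SS wfac_def)
    qed
    have A2: "(if m j = 0 then 0 else (1 - qq ^ (2 * m j)) * (Wc n \<alpha>' m4 * f (Wsh n \<alpha>' m4)))
      = (1 - qq ^ (2 * x)) * wfac y (Suc a) * f U"
    proof (cases "Suc a \<le> y")
      case True
      have "Wsh n \<alpha>' m4 = U" using True Suc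
        by (simp add: m4_def U_def Wsh1 j1 t1 m'_def \<alpha>'_def x_def a_def)
      then show ?thesis using Suc by (simp add: Wc1 j1 m4_def \<alpha>'_def mx ax)
    next
      case False
      then show ?thesis using Suc by (simp add: Wc1 j1 m4_def \<alpha>'_def mx ax wfac_def)
    qed
    have B: "(if m t = 0 then 0 else (1 - qq ^ (2 * m t)) *
       ((if m' j = 0 then 0 else (1 - qq ^ (2 * m' j)) * (Wc n \<alpha> m'' * f ((Wsh n \<alpha> m'')(j := Suc (Wsh n \<alpha> m'' j)))))
        - Wc n \<alpha> m' * f (Wsh n \<alpha> m')))
      = (1 - qq ^ (2 * x)) * (wfac y (Suc a) - wfac y a) * f U"
    proof (cases "Suc a \<le> y")
      case True
      have "(Wsh n \<alpha> m'')(j := Suc (Wsh n \<alpha> m'' j)) = U" using True Suc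
        by (simp add: m''_def U_def Wsh1 j1 t1 m'_def x_def a_def)
      then show ?thesis using Suc
        by (simp add: Wc1 j1 t1 m''_def m'_def mx ax U_def wfac_Suc algebra_simps)
    next
      case False
      then show ?thesis using Suc
        by (cases "a = y") (auto simp: Wc1 j1 t1 m''_def m'_def mx ax U_def Wsh1 wfac_Suc wfac_def algebra_simps)
    qed
    have aj: "\<alpha> j = a" by (simp add: j1 a_def)
    show ?thesis unfolding A1 A2 B aj
      using arg_cong[OF scal_star[of y a], of "\<lambda>z. - z * ((1 - qq ^ (2 * x)) * f U)"]
      by (simp add: algebra_simps wfac_SS)
  qed
qed

lemma term_ss:
  fixes \<alpha> :: "nat \<Rightarrow> nat" and m :: cfg and f :: vec
  assumes n: "1 \<le> n" and j: "j \<in> {1..n}"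
  shows "Wc n (\<alpha>(j := Suc (\<alpha> j))) m * (if Wsh n (\<alpha>(j := Suc (\<alpha> j))) m j = 0 then 0 else (1 - qq ^ (2 * Wsh n (\<alpha>(j := Suc (\<alpha> j))) m j)) * f ((Wsh n (\<alpha>(j := Suc (\<alpha> j))) m)(j := Wsh n (\<alpha>(j := Suc (\<alpha> j))) m j - 1)))
     - (if m j = 0 then 0 else (1 - qq ^ (2 * m j)) * (Wc n (\<alpha>(j := Suc (\<alpha> j))) (m(j := m j - 1)) * f (Wsh n (\<alpha>(j := Suc (\<alpha> j))) (m(j := m j - 1)))))
    = - (1 - qq ^ (2 * Suc (\<alpha> j))) * (if m (nexts n j) = 0 then 0 else (1 - qq ^ (2 * m (nexts n j))) *
       ((if (m(nexts n j := m (nexts n j) - 1)) j = 0 then 0 else (1 - qq ^ (2 * (m(nexts n j := m (nexts n j) - 1)) j)) *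
          (Wc n \<alpha> ((m(nexts n j := m (nexts n j) - 1))(j := (m(nexts n j := m (nexts n j) - 1)) j - 1)) *
           f ((Wsh n \<alpha> ((m(nexts n j := m (nexts n j) - 1))(j := (m(nexts n j := m (nexts n j) - 1)) j - 1)))
              (j := Suc (Wsh n \<alpha> ((m(nexts n j := m (nexts n j) - 1))(j := (m(nexts n j := m (nexts n j) - 1)) j - 1)) j)))))
        - Wc n \<alpha> (m(nexts n j := m (nexts n j) - 1)) * f (Wsh n \<alpha> (m(nexts n j := m (nexts n j) - 1)))))"
proof (cases "n = 1")
  case True then show ?thesis using term_ss1[OF True j, of \<alpha> m f] by simp
next
  case False then have "2 \<le> n" using n by simp
  then show ?thesis using term_ss2[OF _ j, of \<alpha> m f] by simp
qed

lemma term_ss_zero: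
  assumes n: "1 \<le> n" and j: "j \<in> {1..n}" and z: "\<alpha> j = 0"
  shows "Wc n \<alpha> m * (if Wsh n \<alpha> m j = 0 then 0 else (1 - qq ^ (2 * Wsh n \<alpha> m j)) * f ((Wsh n \<alpha> m)(j := Wsh n \<alpha> m j - 1)))
     - (if m j = 0 then 0 else (1 - qq ^ (2 * m j)) * (Wc n \<alpha> (m(j := m j - 1)) * f (Wsh n \<alpha> (m(j := m j - 1))))) = 0"
proof -
  define x where "x = m j"
  define a where "a = \<alpha> (prevs n j)"
  define R where "R = (\<Prod>i\<in>{1..n}-{j}. wfac (m i) (\<alpha> (prevs n i)))"
  have c1: "Wc n \<alpha> m = wfac x a * R" by (simp add: Wc_split[OF j] x_def a_def R_def)
  have c2: "Wc n \<alpha> (m(j := m j - 1)) = wfac (x - 1) a * R"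
    by (simp add: Wc_split[OF j] x_def a_def R_def)
  have wj: "Wsh n \<alpha> m j = x - a" using j z by (simp add: Wsh_def x_def a_def)
  have P: "(Wsh n \<alpha> m)(j := Wsh n \<alpha> m j - 1) = Wsh n \<alpha> (m(j := m j - 1))"
    using j z by (auto simp: Wsh_def fun_eq_iff)
  have "(if m j = 0 then 0 else (1 - qq ^ (2 * m j)) * (Wc n \<alpha> (m(j := m j - 1)) * f (Wsh n \<alpha> (m(j := m j - 1)))))
     = wfac x (Suc a) * R * f (Wsh n \<alpha> (m(j := m j - 1)))"
    by (simp add: c2[simplified] wfac_Suc x_def)
  moreover have "Wc n \<alpha> m * (if Wsh n \<alpha> m j = 0 then 0 else (1 - qq ^ (2 * Wsh n \<alpha> m j)) * f ((Wsh n \<alpha> m)(j := Wsh n \<alpha> m j - 1)))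
     = wfac x (Suc a) * R * f (Wsh n \<alpha> (m(j := m j - 1)))"
  proof (cases "a < x")
    case True
    have "wfac x (Suc a) = wfac x a * (1 - qq ^ (2 * (x - a)))" using True by (simp add: wfac_Suc_right)
    moreover have "(Wsh n \<alpha> m)(j := x - Suc a) = Wsh n \<alpha> (m(j := m j - Suc 0))"
      using P wj by simp
    ultimately show ?thesis using True by (simp add: c1 wj)
  next
    case False
    then have "wfac x (Suc a) = 0" by (simp add: wfac_Suc_right)
    moreover have "wfac x a * (if x - a = 0 then 0 else z) = 0" for z :: K
      using False by (cases "a = x") (auto simp: wfac_def)
    ultimately show ?thesis using False by (simp add: c1 wj)
  qed
  ultimately show ?thesis by simp
qed

lemma sstar_sum:
  assumes n: "1 \<le> n" and j: "j \<in> {1..n}"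
  defines "t \<equiv> nexts n j"
  shows "Qcoef n (Suc s) (betS j f) m - betS j (Qcoef n (Suc s) f) m
       = betS t (\<lambda>m. betS j (Qcoef n s (bet j f)) m - Qcoef n s f m) m"
proof -
  define T where "T = (\<lambda>\<alpha>. cc n (Suc s) \<alpha> * (Wc n \<alpha> m * (if Wsh n \<alpha> m j = 0 then 0 else (1 - qq ^ (2 * Wsh n \<alpha> m j)) * f ((Wsh n \<alpha> m)(j := Wsh n \<alpha> m j - 1)))
     - (if m j = 0 then 0 else (1 - qq ^ (2 * m j)) * (Wc n \<alpha> (m(j := m j - 1)) * f (Wsh n \<alpha> (m(j := m j - 1)))))))"
  define B where "B = (\<lambda>\<alpha>. (if m (nexts n j) = 0 then 0 else (1 - qq ^ (2 * m (nexts n j))) *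
       ((if (m(nexts n j := m (nexts n j) - 1)) j = 0 then 0 else (1 - qq ^ (2 * (m(nexts n j := m (nexts n j) - 1)) j)) *
          (Wc n \<alpha> ((m(nexts n j := m (nexts n j) - 1))(j := (m(nexts n j := m (nexts n j) - 1)) j - 1)) *
           f ((Wsh n \<alpha> ((m(nexts n j := m (nexts n j) - 1))(j := (m(nexts n j := m (nexts n j) - 1)) j - 1)))
              (j := Suc (Wsh n \<alpha> ((m(nexts n j := m (nexts n j) - 1))(j := (m(nexts n j := m (nexts n j) - 1)) j - 1)) j)))))
        - Wc n \<alpha> (m(nexts n j := m (nexts n j) - 1)) * f (Wsh n \<alpha> (m(nexts n j := m (nexts n j) - 1))))))"
  have "Qcoef n (Suc s) (betS j f) m - betS j (Qcoef n (Suc s) f) m = (\<Sum>\<alpha>\<in>comps n (Suc s). T \<alpha>)"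
    unfolding T_def betS_def Qcoef_formula[OF n]
    by (cases "m j = 0") (simp_all add: sum_subtractf right_diff_distrib sum_distrib_left mult_ac)
  also have "\<dots> = (\<Sum>\<alpha>\<in>comps n s. T (\<alpha>(j := Suc (\<alpha> j))))"
    by (rule sum_split_shift[OF j]) (simp add: T_def term_ss_zero[OF n j])
  also have "\<dots> = (\<Sum>\<alpha>\<in>comps n s. cc n s \<alpha> * B \<alpha>)"
  proof (intro sum.cong refl)
    fix \<alpha> assume "\<alpha> \<in> comps n s"
    have e: "prevs n j = j \<or> True" by simp
    show "T (\<alpha>(j := Suc (\<alpha> j))) = cc n s \<alpha> * B \<alpha>"
      unfolding T_def term_ss[OF n j, of \<alpha> m f] cc_upd[OF j, of s \<alpha>, symmetric] B_def
      by (simp only: mult.assoc)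
  qed
  also have "\<dots> = betS t (\<lambda>m. betS j (Qcoef n s (bet j f)) m - Qcoef n s f m) m"
    unfolding B_def t_def bet_def betS_def Qcoef_formula[OF n]
    by (cases "m (nexts n j) = 0"; cases "(m(nexts n j := m (nexts n j) - 1)) j = 0")
      (simp_all add: sum_subtractf right_diff_distrib sum_distrib_left sum_negf mult_ac)
  finally show ?thesis .
qed

lemma star_full:
  assumes n: "1 \<le> n" and j: "j \<in> {1..n}"
  shows "Qser n r (bet j f) m - bet j (Qser n r f) m =
       (if r = 0 then 0 else Qser n (r-1) (bet (prevs n j) f) m - betS j (Qser n (r-1) (bet j (bet (prevs n j) f))) m)"
proof (cases r)
  case 0 then show ?thesis by (simp add: Qser_def Qcoef_0)
next
  case (Suc s) then show ?thesis using star_sum[OF n j, of s f m] by (simp add: Qser_def)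
qed

lemma sstar_full:
  assumes n: "1 \<le> n" and j: "j \<in> {1..n}"
  shows "Qser n r (betS j f) m - betS j (Qser n r f) m =
       (if r = 0 then 0 else betS (nexts n j) (\<lambda>m. betS j (Qser n (r-1) (bet j f)) m - Qser n (r-1) f m) m)"
proof (cases r)
  case 0 then show ?thesis by (simp add: Qser_def Qcoef_0)
next
  case (Suc s) then show ?thesis using sstar_sum[OF n j, of s f m] by (simp add: Qser_def)
qed

lemma rels_tbet:
  assumes n: "1 \<le> n"
  shows "rels n (tbet n) (tbetS n)"
proof -
  have X: "ps_sub (tbet n j) (ps_const (bet j)) =
     ps_v (ps_mult (ps_sub ps_one (ps_mult (ps_const (betS j)) (tbet n j))) (tbet n (prevs n j)))"
    if j: "j \<in> {1..n}" for j
    unfolding tbet_def conjQ_def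
    by (rule relX_generic[where Q="Qser n" and P="Qinv n" and bj="bet j" and bp="bet (prevs n j)" and bsj="betS j", OF lin_ps_Q lin_ps_P QP PQ lin_bet lin_bet lin_betS star_full[OF n j]])
  have Y: "ps_sub (tbetS n j) (ps_const (betS j)) =
     ps_v (ps_mult (ps_const (betS (nexts n j))) (ps_sub (ps_mult (ps_const (betS j)) (tbet n j)) ps_one))"
    if j: "j \<in> {1..n}" for j
    unfolding tbet_def tbetS_def conjQ_def
    by (rule relY_generic[where Q="Qser n" and P="Qinv n" and bj="bet j" and bst="betS (nexts n j)" and bsj="betS j", OF lin_ps_Q lin_ps_P QP PQ lin_bet lin_betS lin_betS sstar_full[OF n j]])
  show ?thesis unfolding rels_def eq_on_def using X Y by simp
qed

lemma rhsX_eq: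
  assumes IH: "\<And>k j g. k \<le> s \<Longrightarrow> j \<in> {1..n} \<Longrightarrow> fock n g \<Longrightarrow> X j k g = T j k g"
    and F: "\<And>k j g. j \<in> {1..n} \<Longrightarrow> fock n g \<Longrightarrow> fock n (X j k g)"
    and j: "j \<in> {1..n}" and p: "p \<in> {1..n}" and f: "fock n f"
  shows "ps_mult (ps_sub ps_one (ps_mult (ps_const B) (X j))) (X p) s f m
       = ps_mult (ps_sub ps_one (ps_mult (ps_const B) (T j))) (T p) s f m"
proof -
  have e: "ps_sub ps_one (ps_mult (ps_const B) (X j)) k (X p (s - k) f) m =
        ps_sub ps_one (ps_mult (ps_const B) (T j)) k (T p (s - k) f) m" if k: "k \<in> {..s}" for k
  proof -
    have e1: "X p (s - k) f = T p (s - k) f" using IH[of "s-k" p f] p f by simp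
    have fk: "fock n (X p (s - k) f)" using F p f by simp
    have e2: "X j k (X p (s - k) f) = T j k (X p (s - k) f)" using IH[OF _ j fk] k by simp
    show ?thesis by (simp add: ps_sub_app ps_const_left e1[symmetric] e2)
  qed
  have S: "(\<Sum>k\<le>s. ps_sub ps_one (ps_mult (ps_const B) (X j)) k (X p (s - k) f) m) =
     (\<Sum>k\<le>s. ps_sub ps_one (ps_mult (ps_const B) (T j)) k (T p (s - k) f) m)"
    by (intro sum.cong refl e)
  show ?thesis using S by (simp only: psm_app)
qed

theorem mainTheorem1:
  fixes n :: nat
  assumes "n \<ge> 1"
  shows "rels n (tbet n) (tbetS n) \<and>
    (\<forall>X Y. (\<forall>j\<in>{1..n}. \<forall>r f. fock n f \<longrightarrow> fock n (X j r f)) \<and> rels n X Y \<longrightarrow>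
       (\<forall>j\<in>{1..n}. \<forall>r. eq_on n (X j r) (tbet n j r) \<and> eq_on n (Y j r) (tbetS n j r)))"
proof (intro conjI allI impI)
  have n: "1 \<le> n" using assms by simp
  show RT: "rels n (tbet n) (tbetS n)" by (rule rels_tbet[OF n])
  fix X Y
  assume H: "(\<forall>j\<in>{1..n}. \<forall>r f. fock n f \<longrightarrow> fock n (X j r f)) \<and> rels n X Y"
  have F: "\<And>k j g. j \<in> {1..n} \<Longrightarrow> fock n g \<Longrightarrow> fock n (X j k g)" using H by blast
  have RX: "rels n X Y" using H by blast
  have eqX: "\<And>Z Z' j r f m. rels n Z Z' \<Longrightarrow> j \<in> {1..n} \<Longrightarrow> fock n f \<Longrightarrow>
      Z j r f m = ps_const (bet j) r f m +
        ps_v (ps_mult (ps_sub ps_one (ps_mult (ps_const (betS j)) (Z j))) (Z (prevs n j))) r f m"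
  proof -
    fix Z Z' j r f m assume "rels n Z Z'" "j \<in> {1..n}" "fock n f"
    then have "ps_sub (Z j) (ps_const (bet j)) r f = ps_v (ps_mult (ps_sub ps_one (ps_mult (ps_const (betS j)) (Z j))) (Z (prevs n j))) r f"
      unfolding rels_def eq_on_def by blast
    then have "ps_sub (Z j) (ps_const (bet j)) r f m = ps_v (ps_mult (ps_sub ps_one (ps_mult (ps_const (betS j)) (Z j))) (Z (prevs n j))) r f m"
      by simp
    then show "Z j r f m = ps_const (bet j) r f m +
        ps_v (ps_mult (ps_sub ps_one (ps_mult (ps_const (betS j)) (Z j))) (Z (prevs n j))) r f m"
      by (simp add: ps_sub_app algebra_simps)
  qed
  have XT0: "\<forall>j f. j \<in> {1..n} \<longrightarrow> fock n f \<longrightarrow> X j r f = tbet n j r f" for r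
  proof (induction r rule: less_induct)
    case (less r)
    show ?case
    proof (intro allI impI ext)
      fix j f m assume j: "j \<in> {1..n}" and f: "fock n f"
      have pin: "prevs n j \<in> {1..n}" by (rule prevs_in[OF n j])
      show "X j r f m = tbet n j r f m"
      proof (cases r)
        case 0 then show ?thesis using eqX[OF RX j f, of r m] eqX[OF RT j f, of r m] by (simp add: ps_v_app)
      next
        case (Suc s)
        have "ps_mult (ps_sub ps_one (ps_mult (ps_const (betS j)) (X j))) (X (prevs n j)) s f m
           = ps_mult (ps_sub ps_one (ps_mult (ps_const (betS j)) (tbet n j))) (tbet n (prevs n j)) s f m"
          by (rule rhsX_eq[OF _ F j pin f]) (use less Suc in auto)
        then show ?thesis using eqX[OF RX j f, of r m] eqX[OF RT j f, of r m] Suc by (simp add: ps_v_app)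
      qed
    qed
  qed
  have XT: "\<And>j f. j \<in> {1..n} \<Longrightarrow> fock n f \<Longrightarrow> X j r f = tbet n j r f" for r
    using XT0 by blast
  have eqY: "\<And>Z Z' j r f m. rels n Z Z' \<Longrightarrow> j \<in> {1..n} \<Longrightarrow> fock n f \<Longrightarrow>
      Z' j r f m = ps_const (betS j) r f m +
        ps_v (ps_mult (ps_const (betS (nexts n j))) (ps_sub (ps_mult (ps_const (betS j)) (Z j)) ps_one)) r f m"
  proof -
    fix Z Z' j r f m assume "rels n Z Z'" "j \<in> {1..n}" "fock n f"
    then have "ps_sub (Z' j) (ps_const (betS j)) r f = ps_v (ps_mult (ps_const (betS (nexts n j))) (ps_sub (ps_mult (ps_const (betS j)) (Z j)) ps_one)) r f"
      unfolding rels_def eq_on_def by blast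
    then have "ps_sub (Z' j) (ps_const (betS j)) r f m = ps_v (ps_mult (ps_const (betS (nexts n j))) (ps_sub (ps_mult (ps_const (betS j)) (Z j)) ps_one)) r f m"
      by simp
    then show "Z' j r f m = ps_const (betS j) r f m +
        ps_v (ps_mult (ps_const (betS (nexts n j))) (ps_sub (ps_mult (ps_const (betS j)) (Z j)) ps_one)) r f m"
      by (simp add: ps_sub_app algebra_simps)
  qed
  show "\<forall>j\<in>{1..n}. \<forall>r. eq_on n (X j r) (tbet n j r) \<and> eq_on n (Y j r) (tbetS n j r)"
  proof (intro ballI allI conjI)
    fix j r assume j: "j \<in> {1..n}"
    show "eq_on n (X j r) (tbet n j r)" unfolding eq_on_def using XT j by blast
    show "eq_on n (Y j r) (tbetS n j r)" unfolding eq_on_def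
    proof (intro allI impI ext)
      fix f m assume f: "fock n f"
      have "ps_mult (ps_const (betS (nexts n j))) (ps_sub (ps_mult (ps_const (betS j)) (X j)) ps_one) s f m
         = ps_mult (ps_const (betS (nexts n j))) (ps_sub (ps_mult (ps_const (betS j)) (tbet n j)) ps_one) s f m" for s
        using XT[OF j f, of s] by (simp add: ps_const_left ps_sub_fun)
      then show "Y j r f m = tbetS n j r f m"
        using eqY[OF RX j f, of r m] eqY[OF RT j f, of r m] by (simp add: ps_v_app)
    qed
  qed
qed

end
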